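(* Assume (C-1), (C-2), and the Local Intrinsic Dimension assumption at $\bm\theta_t$ with constant $r$. Then there is a universal constant $c_1>0$ such that $$\|\nabla\mathcal{L}_\mu(\bm\theta_t)-\nabla\mathcal{L}(\bm\theta_t)\|\le\frac{\sqrt3\,\mu Lr\sqrt d}{2}+\frac{\mu L(d+4)\sqrt d}{2}\exp\Big(-\frac{c_1}{2}d\Big),$$ and $$\|\nabla\mathcal{L}(\bm\theta_t)\|^2\le3\mu^2L^2r^2d+\mu^2L^2d(d+4)^2\exp(-c_1d)+2\|\nabla\mathcal{L}_\mu(\bm\theta_t)\|^2.$$
   Context: Per-sample losses $\mathcal{L}_i$, overall loss $\mathcal{L}$ on $\mathbb R^d$. (C-1): each $\mathcal{L}_i$ is $L$-smooth. (C-2): unbiased stochastic gradients with variance $\le\sigma^2$ and $\|\nabla\mathcal{L}\|\le G$. $\mathcal{L}_\mu(\bm\theta)=\mathbb E_{\mathbf u\sim\mathcal N(\mathbf 0,\mathbf I_d)}[\mathcal{L}(\bm\theta+\mu\mathbf u)]$, $\mu>0$. $\mathrm{intdim}(\mathbf A)=\mathrm{Tr}(\mathbf A)/\|\mathbf A\|_{\mathrm{op}}$. Local Intrinsic Dimension assumption at $\bm\theta_t$ (step size $\alpha$, parameter $s$, constant $r\le d$): there is a symmetric PSD $\mathbf H(\bm\theta_t)\preceq L\mathbf I_d$ with $\nabla^2\mathcal{L}(\bm\theta)\preceq\mathbf H(\bm\theta_t)$ for all $\|\bm\theta-\bm\theta_t\|\le2\alpha sG+2\mu\sqrt d$, and $\mathrm{intdim}(\mathbf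 H(\bm\theta_t))\le r$. *)

theory Defs
  imports "HOL-Analysis.Analysis" "HOL-Probability.Probability"
begin

text \<open>To let the constant c1 be universal (independent of the dimension d), all the
spaces R^d are realised inside one real inner product space: the finitely supported
real sequences with the standard (Euclidean) inner product.\<close>

typedef fvec = "{f :: nat \<Rightarrow> real. finite {i. f i \<noteq> 0}}"
  morphisms vx Abs_fvec
  by (rule exI[of _ "\<lambda>_. 0"]) simp

setup_lifting type_definition_fvec

lemma fvec_finite [simp]: "finite {i. vx x i \<noteq> 0}"
  using vx by auto

lemma fvec_eqI: "(\<And>i. vx x i = vx y i) \<Longrightarrow> x = y"
  by (metis vx_inject ext)

instantiation fvec :: ab_group_add
begin
lift_definition zero_fvec :: fvec is "\<lambda>_. 0" by simp
lift_definition plus_fvec :: "fvec \<Rightarrow> fvec \<Rightarrow> fvec" is "\<lambda>f g i. f i + g i"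
proof -
  fix f g :: "nat \<Rightarrow> real"
  assume "finite {i. f i \<noteq> 0}" "finite {i. g i \<noteq> 0}"
  then show "finite {i. f i + g i \<noteq> 0}"
    by (rule finite_subset[OF _ finite_UnI, rotated]) auto
qed
lift_definition uminus_fvec :: "fvec \<Rightarrow> fvec" is "\<lambda>f i. - f i" by simp
lift_definition minus_fvec :: "fvec \<Rightarrow> fvec \<Rightarrow> fvec" is "\<lambda>f g i. f i - g i"
proof -
  fix f g :: "nat \<Rightarrow> real"
  assume "finite {i. f i \<noteq> 0}" "finite {i. g i \<noteq> 0}"
  then show "finite {i. f i - g i \<noteq> 0}"
    by (rule finite_subset[OF _ finite_UnI, rotated]) auto
qed
instance by standard (transfer; auto)+
end

instantiation fvec :: real_vector
begin
lift_definition scaleR_fvec :: "real \<Rightarrow> fvec \<Rightarrow> fvec" is "\<lambda>r f i. r * f i"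
proof -
  fix r :: real and f :: "nat \<Rightarrow> real"
  assume "finite {i. f i \<noteq> 0}"
  then show "finite {i. r * f i \<noteq> 0}" by (rule finite_subset[rotated]) auto
qed
instance by standard (transfer; auto simp: algebra_simps)+
end

definition supp :: "fvec \<Rightarrow> nat set" where "supp x = {i. vx x i \<noteq> 0}"

instantiation fvec :: real_inner
begin
definition inner_fvec :: "fvec \<Rightarrow> fvec \<Rightarrow> real" where
  "inner_fvec x y = (\<Sum>i\<in>supp x \<union> supp y. vx x i * vx y i)"
definition norm_fvec :: "fvec \<Rightarrow> real" where "norm_fvec x = sqrt (inner x x)"
definition sgn_fvec :: "fvec \<Rightarrow> fvec" where "sgn_fvec x = x /\<^sub>R norm x"
definition dist_fvec :: "fvec \<Rightarrow> fvec \<Rightarrow> real" where "dist_fvec x y = norm (x - y)"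
definition uniformity_fvec :: "(fvec \<times> fvec) filter" where
  "uniformity_fvec = (INF e\<in>{0<..}. principal {(x, y). dist x y < e})"
definition open_fvec :: "fvec set \<Rightarrow> bool" where
  "open_fvec U = (\<forall>x\<in>U. \<forall>\<^sub>F (x', y) in uniformity. x' = x \<longrightarrow> y \<in> U)"

lemma inner_fvec_on':
  assumes "finite S" "supp x \<subseteq> S \<or> supp y \<subseteq> S"
  shows "inner x y = (\<Sum>i\<in>S. vx x i * vx y i)"
proof -
  have "inner x y = (\<Sum>i\<in>S \<union> supp x \<union> supp y. vx x i * vx y i)"
    unfolding inner_fvec_def
    by (rule sum.mono_neutral_cong_left) (use assms in \<open>auto simp: supp_def\<close>)
  also have "\<dots> = (\<Sum>i\<in>S. vx x i * vx y i)"
    by (rule sum.mono_neutral_cong_right) (use assms in \<open>auto simp: supp_def\<close>)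
  finally show ?thesis .
qed

instance
proof
  fix x y z :: fvec and r :: real
  show "inner x y = inner y x" unfolding inner_fvec_def by (simp add: Un_commute mult.commute)
  define S where "S = supp x \<union> supp y \<union> supp z"
  have fS: "finite S" by (simp add: S_def supp_def)
  have "inner (x + y) z = (\<Sum>i\<in>S. vx (x+y) i * vx z i)"
    by (rule inner_fvec_on') (use fS in \<open>auto simp: S_def supp_def\<close>)
  also have "\<dots> = (\<Sum>i\<in>S. vx x i * vx z i) + (\<Sum>i\<in>S. vx y i * vx z i)"
    by (simp add: plus_fvec.rep_eq distrib_right sum.distrib)
  also have "\<dots> = inner x z + inner y z"
    using fS by (simp add: inner_fvec_on'[of S] S_def)
  finally show "inner (x + y) z = inner x z + inner y z" .
  have "inner (r *\<^sub>R x) y = (\<Sum>i\<in>supp x \<union> supp y. vx (r *\<^sub>R x) i * vx y i)"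
    by (rule inner_fvec_on') (auto simp: supp_def scaleR_fvec.rep_eq)
  then show "inner (r *\<^sub>R x) y = r * inner x y"
    by (simp add: inner_fvec_def scaleR_fvec.rep_eq sum_distrib_left mult.assoc)
  show "0 \<le> inner x x" unfolding inner_fvec_def by (auto intro: sum_nonneg)
  show "(inner x x = 0) = (x = 0)"
  proof
    assume "inner x x = 0"
    then have "(\<Sum>i\<in>supp x. (vx x i)\<^sup>2) = 0" by (simp add: inner_fvec_def power2_eq_square)
    then have "\<forall>i\<in>supp x. (vx x i)\<^sup>2 = 0"
      by (subst (asm) sum_nonneg_eq_0_iff) (auto simp: supp_def)
    then show "x = 0" by (intro fvec_eqI) (auto simp: supp_def zero_fvec.rep_eq)
  qed (simp add: inner_fvec_def supp_def zero_fvec.rep_eq)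
  show "norm x = sqrt (inner x x)" by (simp add: norm_fvec_def)
qed (simp_all add: sgn_fvec_def dist_fvec_def uniformity_fvec_def open_fvec_def)
end

definition Rd :: "nat \<Rightarrow> fvec set" where
  "Rd d = {x. \<forall>i\<ge>d. vx x i = 0}"

lift_definition vec_of :: "nat \<Rightarrow> (nat \<Rightarrow> real) \<Rightarrow> fvec" is
  "\<lambda>d u i. if i < d then u i else 0"
  by (rule finite_subset[of _ "{..<_}"]) auto

definition gauss :: "nat \<Rightarrow> (nat \<Rightarrow> real) measure" where
  "gauss d = PiM {..<d} (\<lambda>_. std_normal_distribution)"

definition smoothed :: "nat \<Rightarrow> real \<Rightarrow> (fvec \<Rightarrow> real) \<Rightarrow> fvec \<Rightarrow> real" where
  "smoothed d \<mu> f \<theta> = (\<integral>u. f (\<theta> + \<mu> *\<^sub>R vec_of d u) \<partial>gauss d)"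

definition has_grad :: "nat \<Rightarrow> (fvec \<Rightarrow> real) \<Rightarrow> fvec \<Rightarrow> fvec \<Rightarrow> bool" where
  "has_grad d f g x \<longleftrightarrow> g \<in> Rd d \<and> (f has_derivative (\<lambda>h. g \<bullet> h)) (at x within Rd d)"

definition smooth_with :: "nat \<Rightarrow> real \<Rightarrow> (fvec \<Rightarrow> real) \<Rightarrow> (fvec \<Rightarrow> fvec) \<Rightarrow> bool" where
  "smooth_with d L f g \<longleftrightarrow> (\<forall>x\<in>Rd d. has_grad d f (g x) x) \<and>
     (\<forall>x\<in>Rd d. \<forall>y\<in>Rd d. norm (g x - g y) \<le> L * norm (x - y))"

definition sym_op :: "nat \<Rightarrow> (fvec \<Rightarrow> fvec) \<Rightarrow> bool" where
  "sym_op d A \<longleftrightarrow> linear A \<and> (\<forall>v\<in>Rd d. A v \<in> Rd d) \<and>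
     (\<forall>u\<in>Rd d. \<forall>v\<in>Rd d. u \<bullet> A v = A u \<bullet> v)"

definition psd_op :: "nat \<Rightarrow> (fvec \<Rightarrow> fvec) \<Rightarrow> bool" where
  "psd_op d A \<longleftrightarrow> sym_op d A \<and> (\<forall>v\<in>Rd d. 0 \<le> v \<bullet> A v)"

definition loewner_le :: "nat \<Rightarrow> (fvec \<Rightarrow> fvec) \<Rightarrow> (fvec \<Rightarrow> fvec) \<Rightarrow> bool" where
  "loewner_le d A B \<longleftrightarrow> (\<forall>v\<in>Rd d. v \<bullet> A v \<le> v \<bullet> B v)"

definition std_basis :: "nat \<Rightarrow> fvec" where
  "std_basis i = vec_of (Suc i) (\<lambda>j. if j = i then 1 else 0)"

definition trace_op :: "nat \<Rightarrow> (fvec \<Rightarrow> fvec) \<Rightarrow> real" where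
  "trace_op d A = (\<Sum>i<d. std_basis i \<bullet> A (std_basis i))"

definition opnorm :: "nat \<Rightarrow> (fvec \<Rightarrow> fvec) \<Rightarrow> real" where
  "opnorm d A = Sup {norm (A v) | v. v \<in> Rd d \<and> norm v = 1}"

definition intdim :: "nat \<Rightarrow> (fvec \<Rightarrow> fvec) \<Rightarrow> real" where
  "intdim d A = trace_op d A / opnorm d A"

end

theory Submission
  imports Defs
begin

lemma vx_vec_of: "vx (vec_of d u) i = (if i < d then u i else 0)"
  by (simp add: vec_of.rep_eq)

lemma vx_add[simp]: "vx (x + y) i = vx x i + vx y i" by (simp add: plus_fvec.rep_eq)
lemma vx_diff[simp]: "vx (x - y) i = vx x i - vx y i" by (simp add: minus_fvec.rep_eq)
lemma vx_minus[simp]: "vx (- x) i = - vx x i" by (simp add: uminus_fvec.rep_eq)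
lemma vx_scaleR[simp]: "vx (c *\<^sub>R x) i = c * vx x i" by (simp add: scaleR_fvec.rep_eq)
lemma vx_zero[simp]: "vx 0 i = 0" by (simp add: zero_fvec.rep_eq)
lemma vx_sum: "finite A \<Longrightarrow> vx (sum f A) i = (\<Sum>a\<in>A. vx (f a) i)"
  by (induct A rule: finite_induct) auto

lemma vx_std_basis: "vx (std_basis j) i = (if i = j then 1 else 0)"
  by (simp add: std_basis_def vx_vec_of)

lemma vec_of_Rd[simp]: "vec_of d u \<in> Rd d"
  by (simp add: Rd_def vx_vec_of)

lemma Rd_add[intro]: "x \<in> Rd d \<Longrightarrow> y \<in> Rd d \<Longrightarrow> x + y \<in> Rd d" by (simp add: Rd_def)
lemma Rd_diff[intro]: "x \<in> Rd d \<Longrightarrow> y \<in> Rd d \<Longrightarrow> x - y \<in> Rd d" by (simp add: Rd_def)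
lemma Rd_minus[intro]: "x \<in> Rd d \<Longrightarrow> - x \<in> Rd d" by (simp add: Rd_def)
lemma Rd_scaleR[intro]: "x \<in> Rd d \<Longrightarrow> c *\<^sub>R x \<in> Rd d" by (simp add: Rd_def)
lemma Rd_zero[simp]: "0 \<in> Rd d" by (simp add: Rd_def)
lemma std_basis_Rd: "i < d \<Longrightarrow> std_basis i \<in> Rd d" by (simp add: Rd_def vx_std_basis)

lemma supp_Rd: "x \<in> Rd d \<Longrightarrow> supp x \<subseteq> {..<d}"
  by (auto simp: supp_def Rd_def not_less[symmetric])

lemma inner_Rd: "x \<in> Rd d \<or> y \<in> Rd d \<Longrightarrow> inner x y = (\<Sum>i<d. vx x i * vx y i)"
  by (rule inner_fvec_on') (auto dest: supp_Rd)

lemma inner_std_basis: "inner (std_basis i) x = vx x i"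
proof -
  have "inner (std_basis i) x = (\<Sum>j<Suc i. vx (std_basis i) j * vx x j)"
    by (rule inner_Rd) (simp add: std_basis_Rd)
  also have "\<dots> = vx x i" by (simp add: vx_std_basis if_distrib cong: if_cong)
  finally show ?thesis .
qed

lemma inner_std_basis2: "inner x (std_basis i) = vx x i"
  using inner_std_basis by (simp add: inner_commute)

lemma Rd_expand: "x \<in> Rd d \<Longrightarrow> x = (\<Sum>i<d. vx x i *\<^sub>R std_basis i)"
  by (intro fvec_eqI) (auto simp: vx_sum vx_std_basis Rd_def if_distrib cong: if_cong)

lemma vec_of_expand: "vec_of d u = (\<Sum>i<d. u i *\<^sub>R std_basis i)"
  using Rd_expand[OF vec_of_Rd, of d u] by (simp add: vx_vec_of)

lemma norm_sq_Rd: "x \<in> Rd d \<Longrightarrow> (norm x)\<^sup>2 = (\<Sum>i<d. (vx x i)\<^sup>2)"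
  by (subst power2_norm_eq_inner, subst inner_Rd) (auto simp: power2_eq_square)

lemma norm_sq_vec_of: "(norm (vec_of d u))\<^sup>2 = (\<Sum>i<d. (u i)\<^sup>2)"
  using norm_sq_Rd[OF vec_of_Rd[of d u]] by (simp add: vx_vec_of)

lemma norm_std_basis: "norm (std_basis i) = 1"
  using norm_sq_Rd[OF std_basis_Rd[of i "Suc i"]]
  by (simp add: vx_std_basis if_distrib cong: if_cong)
     (metis norm_ge_zero power2_eq_1_iff abs_of_nonneg abs_1 real_sqrt_abs real_sqrt_one)

lemma vec_of_uminus: "vec_of d (\<lambda>i. - u i) = - vec_of d u"
  by (intro fvec_eqI) (simp add: vx_vec_of)

lemma vec_of_cong: "(\<And>i. i < d \<Longrightarrow> u i = v i) \<Longrightarrow> vec_of d u = vec_of d v"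
  by (intro fvec_eqI) (simp add: vx_vec_of)

abbreviation "NN \<equiv> std_normal_distribution"

lemma prob_NN: "prob_space NN"
  by (rule prob_space_normal_density) simp

lemma sets_NN[simp]: "sets NN = sets borel" by simp

lemma pps_NN: "product_prob_space (\<lambda>_::nat. NN)"
  by (rule product_prob_spaceI) (rule prob_NN)

lemma prob_gauss: "prob_space (gauss d)"
  unfolding gauss_def by (rule prob_space_PiM) (rule prob_NN)

lemma space_gauss: "space (gauss d) = (\<Pi>\<^sub>E i\<in>{..<d}. UNIV)"
  by (simp add: gauss_def space_PiM)

lemma comp_measurable[measurable]: "i < d \<Longrightarrow> (\<lambda>u. u i) \<in> borel_measurable (gauss d)"
proof -
  assume "i < d"
  then have "(\<lambda>u. u i) \<in> measurable (gauss d) NN"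
    unfolding gauss_def by (intro measurable_component_singleton) auto
  then show ?thesis using measurable_cong_sets[OF refl sets_NN, of "gauss d"] by simp
qed

lemma distr_comp: "i < d \<Longrightarrow> distr (gauss d) NN (\<lambda>u. u i) = NN"
proof -
  interpret product_prob_space "\<lambda>_::nat. NN" "{..<d}" using pps_NN by simp
  assume "i < d" then show ?thesis unfolding gauss_def by (intro PiM_component) auto
qed

lemma comp_meas_NN: "i < d \<Longrightarrow> (\<lambda>u. u i) \<in> measurable (gauss d) NN"
  using comp_measurable measurable_cong_sets[OF refl sets_NN, of "gauss d"] by simp

lemma integrable_comp:
  fixes g :: "real \<Rightarrow> real"
  assumes "i < d" "integrable NN g"
  shows "integrable (gauss d) (\<lambda>u. g (u i))"
proof -
  have "integrable (distr (gauss d) NN (\<lambda>u. u i)) g" using assms distr_comp by simp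
  then show ?thesis using comp_meas_NN[OF assms(1)] assms(2)
    by (subst (asm) integrable_distr_eq) auto
qed

lemma integral_comp:
  fixes g :: "real \<Rightarrow> real"
  assumes "i < d" "g \<in> borel_measurable borel"
  shows "(\<integral>u. g (u i) \<partial>gauss d) = integral\<^sup>L NN g"
proof -
  have "(\<integral>u. g (u i) \<partial>gauss d) = integral\<^sup>L (distr (gauss d) NN (\<lambda>u. u i)) g"
    using comp_meas_NN[OF assms(1)] assms(2) by (subst integral_distr) auto
  then show ?thesis using distr_comp[OF assms(1)] by simp
qed

lemma NN_moment: "integrable NN (\<lambda>x. x ^ k)"
  by (rule integrable_std_normal_distribution_moment)

lemma NN_mean: "integral\<^sup>L NN (\<lambda>x. x) = 0"
  using integral_std_normal_distribution_moment_odd[of 1] by simp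

lemma NN_var: "integral\<^sup>L NN (\<lambda>x. x\<^sup>2) = 1"
  using std_normal_distribution_even_moments(1)[of 1] by simp

lemma gauss_int_u: "i < d \<Longrightarrow> integrable (gauss d) (\<lambda>u. u i)"
  using integrable_comp[of i d "\<lambda>x. x"] NN_moment[of 1] by simp

lemma gauss_int_u2: "i < d \<Longrightarrow> integrable (gauss d) (\<lambda>u. (u i)\<^sup>2)"
  using integrable_comp[of i d "\<lambda>x. x\<^sup>2"] NN_moment[of 2] by simp

lemma gauss_E_u: "i < d \<Longrightarrow> (\<integral>u. u i \<partial>gauss d) = 0"
  using integral_comp[of i d "\<lambda>x. x"] NN_mean by simp

lemma gauss_E_u2: "i < d \<Longrightarrow> (\<integral>u. (u i)\<^sup>2 \<partial>gauss d) = 1"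
  using integral_comp[of i d "\<lambda>x. x\<^sup>2"] NN_var by simp

lemma gauss_prod:
  fixes f :: "nat \<Rightarrow> real \<Rightarrow> real"
  assumes "\<And>i. i < d \<Longrightarrow> integrable NN (f i)"
  shows "integrable (gauss d) (\<lambda>u. \<Prod>i<d. f i (u i))"
    and "(\<integral>u. (\<Prod>i<d. f i (u i)) \<partial>gauss d) = (\<Prod>i<d. integral\<^sup>L NN (f i))"
proof -
  interpret product_prob_space "\<lambda>_::nat. NN" "{..<d}" using pps_NN by simp
  show "integrable (gauss d) (\<lambda>u. \<Prod>i<d. f i (u i))"
    unfolding gauss_def by (rule product_integrable_prod) (auto intro: assms)
  show "(\<integral>u. (\<Prod>i<d. f i (u i)) \<partial>gauss d) = (\<Prod>i<d. integral\<^sup>L NN (f i))"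
    unfolding gauss_def by (rule product_integral_prod) (auto intro: assms)
qed

lemma gauss_E_uu:
  assumes "i < d" "j < d" "i \<noteq> j"
  shows "integrable (gauss d) (\<lambda>u. u i * u j)" "(\<integral>u. u i * u j \<partial>gauss d) = 0"
proof -
  define f where "f = (\<lambda>k (x::real). if k = i \<or> k = j then x else 1)"
  have eq: "(\<Prod>k<d. f k (u k)) = u i * u j" for u
  proof -
    have "(\<Prod>k<d. f k (u k)) = (\<Prod>k\<in>{i,j}. f k (u k)) * (\<Prod>k\<in>{..<d}-{i,j}. f k (u k))"
      using assms by (subst prod.subset_diff[of "{i,j}"]) auto
    also have "(\<Prod>k\<in>{..<d}-{i,j}. f k (u k)) = 1" by (intro prod.neutral) (auto simp: f_def)
    finally show ?thesis using assms by (simp add: f_def)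
  qed
  interpret NN: prob_space NN by (rule prob_NN)
  have int: "\<And>k. k < d \<Longrightarrow> integrable NN (f k)"
  proof -
    fix k show "integrable NN (f k)"
      using NN_moment[of 1] by (cases "k = i \<or> k = j") (auto simp: f_def)
  qed
  show "integrable (gauss d) (\<lambda>u. u i * u j)" using gauss_prod(1)[of d f, OF int] by (simp add: eq)
  have "(\<integral>u. u i * u j \<partial>gauss d) = (\<Prod>k<d. integral\<^sup>L NN (f k))"
    using gauss_prod(2)[of d f, OF int] by (simp add: eq)
  also have "\<dots> = 0" using assms by (intro prod_zero bexI[of _ i]) (auto simp: f_def NN_mean)
  finally show "(\<integral>u. u i * u j \<partial>gauss d) = 0" .
qed

lemma gauss_uu:
  assumes "i < d" "j < d"
  shows "integrable (gauss d) (\<lambda>u. u i * u j)" "(\<integral>u. u i * u j \<partial>gauss d) = (if i = j then 1 else 0)"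
  using gauss_E_uu[OF assms] gauss_int_u2[OF assms(1)] gauss_E_u2[OF assms(1)]
  by (auto simp: power2_eq_square)

lemma cont_vec_of: "continuous_on UNIV (\<lambda>z::nat \<Rightarrow> real. vec_of d z)"
proof -
  have "continuous_on UNIV (\<lambda>z::nat \<Rightarrow> real. \<Sum>i<d. z i *\<^sub>R std_basis i)"
    by (intro continuous_on_sum continuous_on_scaleR continuous_on_const
        continuous_on_product_coordinates)
  then show ?thesis by (simp add: vec_of_expand)
qed

lemma meas_vec_of:
  fixes F :: "fvec \<Rightarrow> real"
  assumes "continuous_on (Rd d) F"
  shows "(\<lambda>u. F (vec_of d u)) \<in> borel_measurable (gauss d)"
proof -
  define E where "E = (\<lambda>(u::nat\<Rightarrow>real) (i::nat). if i < d then u i else 0)"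
  have E: "E \<in> measurable (gauss d) (Pi\<^sub>M UNIV (\<lambda>_. borel :: real measure))"
    unfolding E_def
  proof (rule measurable_PiM_single')
    fix i :: nat
    show "(\<lambda>u. if i < d then u i else 0) \<in> borel_measurable (gauss d)"
      by (cases "i < d") (auto intro: comp_measurable)
  qed auto
  define G where "G = (\<lambda>z. F (vec_of d z))"
  have "continuous_on UNIV G"
    unfolding G_def by (rule continuous_on_compose2[OF assms cont_vec_of]) auto
  then have "G \<in> borel_measurable borel" by (rule borel_measurable_continuous_onI)
  then have "G \<in> borel_measurable (Pi\<^sub>M UNIV (\<lambda>_::nat. borel :: real measure))"
    using measurable_cong_sets[OF sets_PiM_equal_borel refl] by blast
  then have "(\<lambda>u. G (E u)) \<in> borel_measurable (gauss d)"
    using E by (rule measurable_compose[rotated])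
  moreover have "G (E u) = F (vec_of d u)" for u
    unfolding G_def E_def by (rule arg_cong[of _ _ F], rule vec_of_cong) simp
  ultimately show ?thesis by simp
qed

lemma meas_vec_of_cont:
  fixes F :: "fvec \<Rightarrow> real"
  shows "continuous_on UNIV F \<Longrightarrow> (\<lambda>u. F (vec_of d u)) \<in> borel_measurable (gauss d)"
  by (rule meas_vec_of) (rule continuous_on_subset, auto)

lemma int_normsq: "integrable (gauss d) (\<lambda>u. (norm (vec_of d u))\<^sup>2)"
  "(\<integral>u. (norm (vec_of d u))\<^sup>2 \<partial>gauss d) = real d"
proof -
  show "integrable (gauss d) (\<lambda>u. (norm (vec_of d u))\<^sup>2)"
    unfolding norm_sq_vec_of by (rule Bochner_Integration.integrable_sum) (auto intro: gauss_int_u2)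
  have "(\<integral>u. (norm (vec_of d u))\<^sup>2 \<partial>gauss d) = (\<Sum>i<d. \<integral>u. (u i)\<^sup>2 \<partial>gauss d)"
    unfolding norm_sq_vec_of by (rule Bochner_Integration.integral_sum) (auto intro: gauss_int_u2)
  also have "\<dots> = real d" by (simp add: gauss_E_u2)
  finally show "(\<integral>u. (norm (vec_of d u))\<^sup>2 \<partial>gauss d) = real d" .
qed

lemma sqrt_le_avg: "0 \<le> y \<Longrightarrow> 0 < t \<Longrightarrow> sqrt y \<le> (y / t + t) / 2"
proof -
  assume y: "0 \<le> y" and t: "0 < t"
  have "0 \<le> (sqrt y - t)\<^sup>2" by simp
  then have "2 * t * sqrt y \<le> y + t\<^sup>2" using y by (simp add: power2_eq_square algebra_simps)
  then show ?thesis using t by (simp add: field_simps power2_eq_square)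
qed

lemma jensen_sqrt:
  assumes "prob_space M" "integrable M f" "\<And>x. 0 \<le> f x" "integrable M (\<lambda>x. sqrt (f x))"
  shows "(\<integral>x. sqrt (f x) \<partial>M) \<le> sqrt (\<integral>x. f x \<partial>M)"
proof -
  interpret prob_space M by fact
  define a where "a = (\<integral>x. f x \<partial>M)"
  have a0: "0 \<le> a" unfolding a_def using assms(3) by (simp add: integral_nonneg)
  have key: "(\<integral>x. sqrt (f x) \<partial>M) \<le> (a / t + t) / 2" if t: "0 < t" for t
  proof -
    have pw: "\<And>x. sqrt (f x) \<le> (f x / t + t) / 2" using sqrt_le_avg assms(3) t by blast
    have "(\<integral>x. sqrt (f x) \<partial>M) \<le> (\<integral>x. (f x / t + t) / 2 \<partial>M)"
      using assms t pw by (intro integral_mono) auto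
    also have "\<dots> = (a / t + t) / 2" using assms(2) unfolding a_def by (simp add: prob_space)
    finally show ?thesis .
  qed
  show ?thesis
  proof (cases "a = 0")
    case False
    then have "0 < sqrt a" using a0 by simp
    have sa: "0 < sqrt a" by fact
    from key[OF this] have "(\<integral>x. sqrt (f x) \<partial>M) \<le> (a / sqrt a + sqrt a) / 2" .
    also have "a / sqrt a = sqrt a" using a0 by (simp add: real_div_sqrt)
    finally show ?thesis unfolding a_def by simp
  next
    case True
    have "(\<integral>x. sqrt (f x) \<partial>M) \<le> t" if "0 < t" for t
      using key[of "2*t"] that True by simp
    then have "(\<integral>x. sqrt (f x) \<partial>M) \<le> 0" by (meson dense not_le)
    then show ?thesis using True unfolding a_def by simp
  qed
qed

lemma int_const_gauss: "integrable (gauss d) (\<lambda>_. c::real)"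
proof -
  interpret prob_space "gauss d" by (rule prob_gauss)
  show ?thesis by simp
qed

lemma int_norm: "integrable (gauss d) (\<lambda>u. norm (vec_of d u))"
proof (rule Bochner_Integration.integrable_bound[OF Bochner_Integration.integrable_add[OF int_const_gauss int_normsq(1)]])
  show "(\<lambda>u. norm (vec_of d u)) \<in> borel_measurable (gauss d)"
    by (rule meas_vec_of_cont) (rule continuous_on_norm_id)
  show "AE x in gauss d. norm (norm (vec_of d x)) \<le> norm (1 + (norm (vec_of d x))\<^sup>2)"
  proof (intro AE_I2)
    fix x
    have "norm (vec_of d x) \<le> 1 + (norm (vec_of d x))\<^sup>2"
    proof -
      have "0 \<le> (norm (vec_of d x) - 1/2)\<^sup>2" by simp
      then show ?thesis by (simp add: power2_eq_square algebra_simps)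
    qed
    then show "norm (norm (vec_of d x)) \<le> norm (1 + (norm (vec_of d x))\<^sup>2)" by simp
  qed
qed

lemma E_norm_le: "(\<integral>u. norm (vec_of d u) \<partial>gauss d) \<le> sqrt (real d)"
proof -
  have "(\<integral>u. sqrt ((norm (vec_of d u))\<^sup>2) \<partial>gauss d) \<le> sqrt (\<integral>u. (norm (vec_of d u))\<^sup>2 \<partial>gauss d)"
    by (rule jensen_sqrt[OF prob_gauss int_normsq(1)]) (auto simp: int_norm)
  then show ?thesis by (simp add: int_normsq(2))
qed

lemma quad_expand:
  assumes "linear H"
  shows "inner (vec_of d u) (H (vec_of d u)) =
    (\<Sum>i<d. \<Sum>j<d. u i * u j * inner (std_basis i) (H (std_basis j)))"
proof -
  have "H (vec_of d u) = (\<Sum>j<d. u j *\<^sub>R H (std_basis j))"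
    unfolding vec_of_expand using assms by (simp add: linear_sum linear_scale o_def)
  then have "inner (vec_of d u) (H (vec_of d u)) =
    (\<Sum>j<d. \<Sum>i<d. u i * u j * inner (std_basis i) (H (std_basis j)))"
    by (simp add: vec_of_expand inner_sum_left inner_sum_right sum_distrib_left mult_ac)
  also have "\<dots> = (\<Sum>i<d. \<Sum>j<d. u i * u j * inner (std_basis i) (H (std_basis j)))"
    by (rule sum.swap)
  finally show ?thesis .
qed

lemma E_quad:
  assumes "linear H"
  shows "integrable (gauss d) (\<lambda>u. inner (vec_of d u) (H (vec_of d u)))"
    "(\<integral>u. inner (vec_of d u) (H (vec_of d u)) \<partial>gauss d) = trace_op d H"
proof -
  have int: "integrable (gauss d) (\<lambda>u. u i * u j * c)" if "i < d" "j < d" for i j c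
    using gauss_uu(1)[OF that] by simp
  show "integrable (gauss d) (\<lambda>u. inner (vec_of d u) (H (vec_of d u)))"
    unfolding quad_expand[OF assms]
    by (auto intro!: Bochner_Integration.integrable_sum int)
  have inner_int: "(\<integral>u. (\<Sum>j<d. u i * u j * inner (std_basis i) (H (std_basis j))) \<partial>gauss d) =
      (\<Sum>j<d. (\<integral>u. u i * u j \<partial>gauss d) * inner (std_basis i) (H (std_basis j)))" if "i < d" for i
    by (subst Bochner_Integration.integral_sum) (auto intro!: int that simp: gauss_uu(1)[OF that])
  have "(\<integral>u. inner (vec_of d u) (H (vec_of d u)) \<partial>gauss d) =
      (\<Sum>i<d. \<integral>u. (\<Sum>j<d. u i * u j * inner (std_basis i) (H (std_basis j))) \<partial>gauss d)"
    unfolding quad_expand[OF assms]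
    by (rule Bochner_Integration.integral_sum) (auto intro!: Bochner_Integration.integrable_sum int)
  also have "\<dots> = (\<Sum>i<d. \<Sum>j<d. (\<integral>u. u i * u j \<partial>gauss d) * inner (std_basis i) (H (std_basis j)))"
    by (intro sum.cong refl inner_int) auto
  also have "\<dots> = (\<Sum>i<d. inner (std_basis i) (H (std_basis i)))"
  proof -
    have e: "(if P then 1 else 0) * (c::real) = (if P then c else 0)" for P c by simp
    show ?thesis by (simp add: gauss_uu e)
  qed
  finally show "(\<integral>u. inner (vec_of d u) (H (vec_of d u)) \<partial>gauss d) = trace_op d H"
    by (simp add: trace_op_def)
qed

lemma dens_exp: "std_normal_density x * exp (x\<^sup>2 / 4) = sqrt 2 * normal_density 0 (sqrt 2) x"
proof -
  have e: "exp (- x\<^sup>2 / 2) * exp (x\<^sup>2 / 4) = exp (- x\<^sup>2 / 4)" by (simp add: exp_add[symmetric])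
  have s1: "sqrt (2 * pi * (sqrt 2)\<^sup>2) = 2 * sqrt pi" by (simp add: real_sqrt_mult)
  have s2: "sqrt (2 * pi) = sqrt 2 * sqrt pi" by (simp add: real_sqrt_mult)
  have "std_normal_density x * exp (x\<^sup>2 / 4) = 1 / sqrt (2 * pi) * exp (- x\<^sup>2 / 4)"
    unfolding std_normal_density_def using e by (simp add: mult.assoc)
  also have "\<dots> = sqrt 2 * normal_density 0 (sqrt 2) x"
    unfolding normal_density_def s1 s2 by (simp add: field_simps)
  finally show ?thesis .
qed

lemma NN_exp: "integrable NN (\<lambda>x. exp (x\<^sup>2 / 4))" "integral\<^sup>L NN (\<lambda>x. exp (x\<^sup>2 / 4)) = sqrt 2"
proof -
  have m: "(\<lambda>x::real. exp (x\<^sup>2 / 4)) \<in> borel_measurable borel" by measurable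
  have "integrable lborel (\<lambda>x. sqrt 2 * normal_density 0 (sqrt 2) x)" by simp
  then show "integrable NN (\<lambda>x. exp (x\<^sup>2 / 4))"
    by (subst integrable_density) (auto simp: dens_exp m)
  have "integral\<^sup>L NN (\<lambda>x. exp (x\<^sup>2 / 4)) = (\<integral>x. sqrt 2 * normal_density 0 (sqrt 2) x \<partial>lborel)"
    by (subst integral_density) (auto simp: dens_exp m)
  also have "\<dots> = sqrt 2" by simp
  finally show "integral\<^sup>L NN (\<lambda>x. exp (x\<^sup>2 / 4)) = sqrt 2" .
qed

lemma exp_normsq: "exp ((norm (vec_of d u))\<^sup>2 / 4) = (\<Prod>i<d. exp ((u i)\<^sup>2 / 4))"
  unfolding norm_sq_vec_of by (simp add: sum_divide_distrib exp_sum)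

lemma gauss_exp: "integrable (gauss d) (\<lambda>u. exp ((norm (vec_of d u))\<^sup>2 / 4))"
  "(\<integral>u. exp ((norm (vec_of d u))\<^sup>2 / 4) \<partial>gauss d) = sqrt 2 ^ d"
  unfolding exp_normsq using gauss_prod[of d "\<lambda>_ x. exp (x\<^sup>2 / 4)"] NN_exp by auto

lemma uminus_meas_NN: "(uminus :: real \<Rightarrow> real) \<in> measurable NN NN"
  using measurable_cong_sets[OF sets_NN sets_NN] by simp

lemma distr_NN_uminus: "distr NN NN uminus = NN"
proof (rule measure_eqI)
  show "sets (distr NN NN uminus) = sets NN" by simp
  fix A assume "A \<in> sets (distr NN NN uminus)"
  then have A[measurable]: "A \<in> sets borel" by simp
  define g where "g = (\<lambda>x::real. ennreal (std_normal_density x) * indicator A x)"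
  have gm: "g \<in> borel_measurable borel" unfolding g_def by measurable
  have sym: "std_normal_density (- x) = std_normal_density x" for x
    by (simp add: normal_density_def)
  have "emeasure (distr NN NN uminus) A = emeasure NN (uminus -` A \<inter> space NN)"
    by (rule emeasure_distr[OF uminus_meas_NN]) (simp add: A)
  also have "\<dots> = emeasure NN (uminus -` A)" by simp
  also have "\<dots> = (\<integral>\<^sup>+ x. ennreal (std_normal_density x) * indicator (uminus -` A) x \<partial>lborel)"
  proof (rule emeasure_density)
    have "uminus -` A \<inter> space lborel \<in> sets lborel"
      by (rule measurable_sets[OF _ A]) simp
    then show "uminus -` A \<in> sets lborel" by simp
  qed simp
  also have "\<dots> = (\<integral>\<^sup>+ x. g (- x) \<partial>lborel)"
    unfolding g_def by (intro nn_integral_cong) (simp add: sym indicator_def)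
  also have "\<dots> = (\<integral>\<^sup>+ x. g x \<partial>distr lborel borel uminus)"
    by (rule nn_integral_distr[symmetric]) (auto simp: gm)
  also have "\<dots> = (\<integral>\<^sup>+ x. g x \<partial>lborel)" by (simp add: lborel_distr_uminus)
  also have "\<dots> = emeasure NN A"
    unfolding g_def by (rule emeasure_density[symmetric]) auto
  finally show "emeasure (distr NN NN uminus) A = emeasure NN A" .
qed

lemma compose_meas: "compose {..<d} uminus \<in> measurable (gauss d) (gauss d)"
proof -
  have "(\<lambda>u i. if i \<in> {..<d} then - (u i :: real) else undefined) \<in> measurable (gauss d) (Pi\<^sub>M {..<d} (\<lambda>_. NN))"
  proof (rule measurable_PiM_single')
    fix i assume "i \<in> {..<d}"
    then have "(\<lambda>u. - u i) \<in> borel_measurable (gauss d)" by (auto intro: comp_measurable)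
    then show "(\<lambda>u. if i \<in> {..<d} then - u i else undefined) \<in> measurable (gauss d) NN"
      using \<open>i \<in> {..<d}\<close> measurable_cong_sets[OF refl sets_NN, of "gauss d"] by simp
  qed (auto simp: space_gauss)
  then show ?thesis unfolding gauss_def compose_def restrict_def by simp
qed

lemma distr_gauss_reflect: "distr (gauss d) (gauss d) (compose {..<d} uminus) = gauss d"
proof -
  have "distr (gauss d) (gauss d) (compose {..<d} uminus) = Pi\<^sub>M {..<d} (\<lambda>i. distr NN NN uminus)"
    unfolding gauss_def
    by (rule distr_PiM_finite_prob_space') (auto intro: prob_NN uminus_meas_NN)
  then show ?thesis by (simp add: distr_NN_uminus gauss_def)
qed

lemma gauss_reflect:
  fixes F :: "fvec \<Rightarrow> real"
  assumes "(\<lambda>u. F (vec_of d u)) \<in> borel_measurable (gauss d)"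
  shows "(\<integral>u. F (- vec_of d u) \<partial>gauss d) = (\<integral>u. F (vec_of d u) \<partial>gauss d)"
proof -
  have "(\<integral>u. F (vec_of d u) \<partial>gauss d) =
      (\<integral>u. F (vec_of d u) \<partial>distr (gauss d) (gauss d) (compose {..<d} uminus))"
    by (simp add: distr_gauss_reflect)
  also have "\<dots> = (\<integral>u. F (vec_of d (compose {..<d} uminus u)) \<partial>gauss d)"
    by (rule integral_distr[OF compose_meas assms])
  also have "\<dots> = (\<integral>u. F (- vec_of d u) \<partial>gauss d)"
  proof -
    have "vec_of d (compose {..<d} uminus u) = - vec_of d u" for u
      by (subst vec_of_uminus[symmetric], rule vec_of_cong) (simp add: compose_def)
    then show ?thesis by simp
  qed
  finally show ?thesis by simp
qed

lemma texp_mono: "1 \<le> (d::real) \<Longrightarrow> d \<le> t \<Longrightarrow> t * exp (- t) \<le> d * exp (- d)"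
proof -
  assume d: "1 \<le> d" and t: "d \<le> t"
  have "1 + (t - d) \<le> exp (t - d)" by (rule exp_ge_add_one_self)
  moreover have "t / d \<le> 1 + (t - d)"
  proof -
    have h: "0 \<le> (d - 1) * (t - d)" using d t by simp
    have "(d - 1) * (t - d) = d * (1 + (t - d)) - t" by (simp add: algebra_simps)
    then have "t \<le> d * (1 + (t - d))" using h by linarith
    then show ?thesis using d by (simp add: divide_le_eq mult.commute)
  qed
  ultimately have "t / d \<le> exp (t - d)" by linarith
  then have "t \<le> d * exp (t - d)" using d by (simp add: divide_le_eq mult.commute)
  then have "t * exp (- t) \<le> d * exp (t - d) * exp (- t)" by (rule mult_right_mono) auto
  also have "exp (t - d) * exp (- t) = exp (- d)" by (simp add: exp_add[symmetric])
  then have "d * exp (t - d) * exp (- t) = d * exp (- d)" by (simp add: mult.assoc)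
  finally show ?thesis .
qed

lemma pt_tail: "1 \<le> (d::real) \<Longrightarrow> 4 * d < s \<Longrightarrow> s \<le> 4 * d * exp (- d) * exp (s / 4)"
proof -
  assume d: "1 \<le> d" and s: "4 * d < s"
  have "(s/4) * exp (- (s/4)) \<le> d * exp (- d)" using d s by (intro texp_mono) auto
  then have "(s/4) \<le> d * exp (- d) * exp (s/4)" by (simp add: exp_minus field_simps)
  then show ?thesis by simp
qed

definition tailf :: "nat \<Rightarrow> real \<Rightarrow> real" where
  "tailf d y = (if 2 * sqrt (real d) < y then y else 0)"

lemma tailf_meas[measurable]: "tailf d \<in> borel_measurable borel"
  unfolding tailf_def by measurable

lemma tail_bound:
  assumes "1 \<le> d"
  shows "integrable (gauss d) (\<lambda>u. tailf d (norm (vec_of d u)))"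
    "(\<integral>u. tailf d (norm (vec_of d u)) \<partial>gauss d) \<le> 2 * sqrt (real d) * exp (- real d / 2)"
proof -
  let ?n = "\<lambda>u. norm (vec_of d u)"
  have nm: "?n \<in> borel_measurable (gauss d)" by (rule meas_vec_of_cont) (rule continuous_on_norm_id)
  have tm: "(\<lambda>u. tailf d (?n u)) \<in> borel_measurable (gauss d)"
    using measurable_compose[OF nm tailf_meas] by (simp add: o_def)
  have sd: "0 < sqrt (real d)" using assms by simp
  have pw: "tailf d (?n u) \<le> (2 * sqrt (real d) * exp (- real d)) * exp ((?n u)\<^sup>2 / 4)" for u
  proof (cases "2 * sqrt (real d) < ?n u")
    case True
    have "4 * real d < (?n u)\<^sup>2"
    proof -
      have "(2 * sqrt (real d))\<^sup>2 < (?n u)\<^sup>2" using True sd by (intro power_strict_mono) auto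
      then show ?thesis by (simp add: power_mult_distrib)
    qed
    then have "(?n u)\<^sup>2 \<le> 4 * real d * exp (- real d) * exp ((?n u)\<^sup>2 / 4)"
      using assms by (intro pt_tail) auto
    define c where "c = 2 * sqrt (real d) * exp (- real d) * exp ((?n u)\<^sup>2 / 4)"
    have c0: "0 \<le> c" unfolding c_def by simp
    have ss: "sqrt (real d) * (sqrt (real d) * X) = real d * X" for X by (simp add: mult.assoc[symmetric])
    have "?n u * ?n u \<le> (2 * sqrt (real d)) * c"
      using \<open>(?n u)\<^sup>2 \<le> _\<close> unfolding c_def power2_eq_square[of "?n u"]
      by (simp add: mult_ac ss)
    also have "\<dots> \<le> ?n u * c" using True c0 by (intro mult_right_mono) auto
    finally have "?n u * ?n u \<le> ?n u * c" .
    moreover have "0 < ?n u" using True sd by linarith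
    ultimately have "?n u \<le> c" using mult_le_cancel_left_pos[of "?n u" "?n u" c] by simp
    then have "?n u \<le> 2 * sqrt (real d) * exp (- real d) * exp ((?n u)\<^sup>2 / 4)" by (simp add: c_def)
    then show ?thesis using True by (simp add: tailf_def)
  next
    case False
    then show ?thesis by (simp add: tailf_def)
  qed
  have tnn: "0 \<le> tailf d (?n u)" for u by (simp add: tailf_def)
  have ib: "integrable (gauss d) (\<lambda>u. (2 * sqrt (real d) * exp (- real d)) * exp ((?n u)\<^sup>2 / 4))"
    using gauss_exp(1) by simp
  show int: "integrable (gauss d) (\<lambda>u. tailf d (?n u))"
    by (rule Bochner_Integration.integrable_bound[OF ib tm]) (auto intro!: AE_I2 simp: tnn pw abs_of_nonneg)
  have "(\<integral>u. tailf d (?n u) \<partial>gauss d) \<le> (\<integral>u. (2 * sqrt (real d) * exp (- real d)) * exp ((?n u)\<^sup>2 / 4) \<partial>gauss d)"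
    by (rule integral_mono[OF int ib]) (rule pw)
  also have "\<dots> = 2 * sqrt (real d) * exp (- real d) * sqrt 2 ^ d"
    using gauss_exp(2) by simp
  also have "\<dots> \<le> 2 * sqrt (real d) * exp (- real d / 2)"
  proof -
    have "sqrt 2 \<le> exp (1/2)"
    proof -
      have "2 \<le> exp (1::real)" using exp_ge_add_one_self[of 1] by simp
      then have "sqrt 2 \<le> sqrt (exp 1)" by simp
      moreover have "sqrt (exp 1) = exp (1/2::real)"
        by (rule real_sqrt_unique) (simp_all add: power2_eq_square exp_add[symmetric])
      ultimately show ?thesis by simp
    qed
    then have "sqrt 2 ^ d \<le> exp (1/2) ^ d" by (intro power_mono) auto
    also have "\<dots> = exp (real d / 2)" by (simp add: exp_of_nat_mult[symmetric])
    finally have "exp (- real d) * sqrt 2 ^ d \<le> exp (- real d) * exp (real d / 2)"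
      by (intro mult_left_mono) auto
    also have "\<dots> = exp (- real d / 2)" by (simp add: exp_add[symmetric])
    finally show ?thesis using sd by (simp add: mult.assoc)
  qed
  finally show "(\<integral>u. tailf d (?n u) \<partial>gauss d) \<le> 2 * sqrt (real d) * exp (- real d / 2)" .
qed

lemma line_vderiv:
  fixes F :: "fvec \<Rightarrow> 'b::real_normed_vector"
  assumes F: "(F has_derivative F') (at (y0 + \<tau> *\<^sub>R a) within Rd d)" and y0: "y0 \<in> Rd d" and a: "a \<in> Rd d"
  shows "((\<lambda>t. F (y0 + t *\<^sub>R a)) has_vector_derivative F' a) (at \<tau>)"
proof -
  define l where "l = (\<lambda>t::real. y0 + t *\<^sub>R a)"
  have l: "(l has_derivative (\<lambda>h. h *\<^sub>R a)) (at \<tau> within UNIV)"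
    unfolding l_def by (auto intro!: derivative_eq_intros)
  have sub: "l ` UNIV \<subseteq> Rd d" unfolding l_def using y0 a by auto
  have F2: "(F has_derivative F') (at (l \<tau>) within (l ` UNIV))"
    using has_derivative_subset[OF F sub] by (simp add: l_def)
  have "((F \<circ> l) has_derivative (F' \<circ> (\<lambda>h. h *\<^sub>R a))) (at \<tau> within UNIV)"
    by (rule diff_chain_within[OF l F2])
  moreover have "F' \<circ> (\<lambda>h. h *\<^sub>R a) = (\<lambda>h. h *\<^sub>R F' a)"
    using has_derivative_linear[OF F] by (auto simp: o_def linear_scale)
  ultimately show ?thesis unfolding has_vector_derivative_def l_def by (simp add: o_def)
qed

lemma line_rderiv:
  fixes F :: "fvec \<Rightarrow> real"
  assumes "(F has_derivative F') (at (y0 + \<tau> *\<^sub>R a) within Rd d)" "y0 \<in> Rd d" "a \<in> Rd d"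
  shows "((\<lambda>t. F (y0 + t *\<^sub>R a)) has_real_derivative F' a) (at \<tau>)"
  using line_vderiv[OF assms] by (simp add: has_real_derivative_iff_has_vector_derivative)

lemma grad_unique:
  assumes "has_grad d f g1 x" "has_grad d f g2 x" "x \<in> Rd d"
  shows "g1 = g2"
proof -
  have g: "g1 \<in> Rd d" "g2 \<in> Rd d" using assms by (auto simp: has_grad_def)
  define a where "a = g1 - g2"
  have a: "a \<in> Rd d" using g unfolding a_def by auto
  have d1: "(f has_derivative (\<lambda>h. g1 \<bullet> h)) (at (x + 0 *\<^sub>R a) within Rd d)"
    using assms(1) by (simp add: has_grad_def)
  have d2: "(f has_derivative (\<lambda>h. g2 \<bullet> h)) (at (x + 0 *\<^sub>R a) within Rd d)"
    using assms(2) by (simp add: has_grad_def)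
  have "g1 \<bullet> a = g2 \<bullet> a"
    using vector_derivative_unique_at[OF line_vderiv[OF d1 assms(3) a] line_vderiv[OF d2 assms(3) a]] .
  then have "a \<bullet> a = 0" unfolding a_def by (simp add: inner_diff_left)
  then show ?thesis unfolding a_def by simp
qed

lemma grad_taylor:
  fixes f :: "fvec \<Rightarrow> real"
  assumes gr: "\<And>y. y \<in> Rd d \<Longrightarrow> has_grad d f (g y) y"
    and lip: "\<And>y z. y \<in> Rd d \<Longrightarrow> z \<in> Rd d \<Longrightarrow> norm (g y - g z) \<le> L * norm (y - z)"
    and y: "y \<in> Rd d" and h: "h \<in> Rd d" and L: "0 \<le> L"
  shows "\<bar>f (y + h) - f y - g y \<bullet> h\<bar> \<le> L * (norm h)\<^sup>2"
proof -
  define \<phi> where "\<phi> = (\<lambda>t. f (y + t *\<^sub>R h) - t * (g y \<bullet> h))"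
  have der: "DERIV \<phi> t :> (g (y + t *\<^sub>R h) \<bullet> h - g y \<bullet> h)" for t
  proof -
    have "y + t *\<^sub>R h \<in> Rd d" using y h by auto
    then have "(f has_derivative (\<lambda>v. g (y + t *\<^sub>R h) \<bullet> v)) (at (y + t *\<^sub>R h) within Rd d)"
      using gr by (simp add: has_grad_def)
    from line_rderiv[OF this y h] show ?thesis
      unfolding \<phi>_def by (auto intro!: derivative_eq_intros)
  qed
  obtain z where z: "0 < z" "z < 1" "\<phi> 1 - \<phi> 0 = (1 - 0) * (g (y + z *\<^sub>R h) \<bullet> h - g y \<bullet> h)"
    using MVT2[of 0 1 \<phi> "\<lambda>t. g (y + t *\<^sub>R h) \<bullet> h - g y \<bullet> h"] der by auto
  have "\<bar>f (y + h) - f y - g y \<bullet> h\<bar> = \<bar>(g (y + z *\<^sub>R h) - g y) \<bullet> h\<bar>"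
    using z(3) unfolding \<phi>_def by (simp add: inner_diff_left)
  also have "\<dots> \<le> norm (g (y + z *\<^sub>R h) - g y) * norm h" by (rule Cauchy_Schwarz_ineq2)
  also have "\<dots> \<le> (L * norm (z *\<^sub>R h)) * norm h"
    using lip[of "y + z *\<^sub>R h" y] y h by (intro mult_right_mono) auto
  also have "\<dots> \<le> L * (norm h)\<^sup>2"
  proof -
    have "(L * norm (z *\<^sub>R h)) * norm h = z * (L * (norm h)\<^sup>2)"
      using z by (simp add: power2_eq_square mult_ac)
    also have "\<dots> \<le> L * (norm h)\<^sup>2" using z L by (intro mult_left_le_one_le) auto
    finally show ?thesis .
  qed
  finally show ?thesis .
qed

lemma hess_claim:
  fixes f :: "fvec \<Rightarrow> real"
  assumes gr: "\<And>y. y \<in> Rd d \<Longrightarrow> has_grad d f (g y) y"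
    and D: "(g has_derivative D) (at p within Rd d)" and p: "p \<in> Rd d"
    and a: "a \<in> Rd d" and b: "b \<in> Rd d" and e: "0 < e"
  shows "\<exists>\<delta>>0. \<forall>s. 0 < s \<and> s < \<delta> \<longrightarrow>
    \<bar>(f (p + s *\<^sub>R a + s *\<^sub>R b) - f (p + s *\<^sub>R a) - f (p + s *\<^sub>R b) + f p) - s\<^sup>2 * (a \<bullet> D b)\<bar>
      \<le> e * s\<^sup>2 * (norm a * (2 * norm a + norm b))"
proof -
  have lin: "linear D" using D by (rule has_derivative_linear)
  obtain \<delta>0 where d0: "\<delta>0 > 0"
    and d0b: "\<And>y. y \<in> Rd d \<Longrightarrow> norm (y - p) < \<delta>0 \<Longrightarrow> norm (g y - g p - D (y - p)) \<le> e * norm (y - p)"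
    using D e unfolding has_derivative_within_alt by blast
  define \<delta> where "\<delta> = \<delta>0 / (norm a + norm b + 1)"
  have nab: "0 < norm a + norm b + 1" using norm_ge_zero[of a] norm_ge_zero[of b] by linarith
  have dpos: "\<delta> > 0" using d0 nab unfolding \<delta>_def by simp
  show ?thesis
  proof (intro exI[of _ \<delta>] conjI allI impI dpos)
    fix s :: real assume s: "0 < s \<and> s < \<delta>"
    define \<phi> where "\<phi> = (\<lambda>\<tau>. f (p + s *\<^sub>R b + \<tau> *\<^sub>R a) - f (p + \<tau> *\<^sub>R a))"
    have psb: "p + s *\<^sub>R b \<in> Rd d" using p b by auto
    have der: "DERIV \<phi> \<tau> :> (g (p + s *\<^sub>R b + \<tau> *\<^sub>R a) \<bullet> a - g (p + \<tau> *\<^sub>R a) \<bullet> a)" for \<tau>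
    proof -
      have m1: "p + s *\<^sub>R b + \<tau> *\<^sub>R a \<in> Rd d" using psb a by auto
      have m2: "p + \<tau> *\<^sub>R a \<in> Rd d" using p a by auto
      have d1: "(f has_derivative (\<lambda>v. g (p + s *\<^sub>R b + \<tau> *\<^sub>R a) \<bullet> v)) (at (p + s *\<^sub>R b + \<tau> *\<^sub>R a) within Rd d)"
        using gr[OF m1] by (simp add: has_grad_def)
      have d2: "(f has_derivative (\<lambda>v. g (p + \<tau> *\<^sub>R a) \<bullet> v)) (at (p + \<tau> *\<^sub>R a) within Rd d)"
        using gr[OF m2] by (simp add: has_grad_def)
      show ?thesis unfolding \<phi>_def
        by (intro DERIV_diff line_rderiv[OF d1 psb a] line_rderiv[OF d2 p a])
    qed
    obtain \<xi> where xi: "0 < \<xi>" "\<xi> < s"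
      "\<phi> s - \<phi> 0 = (s - 0) * (g (p + s *\<^sub>R b + \<xi> *\<^sub>R a) \<bullet> a - g (p + \<xi> *\<^sub>R a) \<bullet> a)"
      using MVT2[of 0 s \<phi>, OF _ der] s by auto
    have Delta: "\<phi> s - \<phi> 0 = f (p + s *\<^sub>R a + s *\<^sub>R b) - f (p + s *\<^sub>R a) - f (p + s *\<^sub>R b) + f p"
      unfolding \<phi>_def by (simp add: ac_simps)
    define y1 where "y1 = p + s *\<^sub>R b + \<xi> *\<^sub>R a"
    define y2 where "y2 = p + \<xi> *\<^sub>R a"
    have y1p: "y1 - p = \<xi> *\<^sub>R a + s *\<^sub>R b" unfolding y1_def by simp
    have y2p: "y2 - p = \<xi> *\<^sub>R a" unfolding y2_def by simp
    have sd: "s * (norm a + norm b + 1) < \<delta>0"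
      using s nab unfolding \<delta>_def by (simp add: field_simps)
    have n1: "norm (y1 - p) \<le> s * (2 * norm a + norm b) - s * norm a"
    proof -
      have "norm (y1 - p) \<le> \<xi> * norm a + s * norm b" unfolding y1p
        using xi s by (intro order_trans[OF norm_triangle_ineq]) simp
      also have "\<dots> \<le> s * norm a + s * norm b" using xi by (intro add_right_mono mult_right_mono) auto
      finally show ?thesis by (simp add: algebra_simps)
    qed
    have n2: "norm (y2 - p) \<le> s * norm a" unfolding y2p using xi by (simp add: mult_right_mono)
    have n1': "norm (y1 - p) < \<delta>0"
    proof -
      have "s * (2 * norm a + norm b) - s * norm a \<le> s * (norm a + norm b + 1)"
        using s by (simp add: algebra_simps)
      then show ?thesis using n1 sd by linarith
    qed
    have n2': "norm (y2 - p) < \<delta>0"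
    proof -
      have "s * norm a \<le> s * (norm a + norm b + 1)" using s by (intro mult_left_mono) auto
      then show ?thesis using n2 sd by linarith
    qed
    have y1d: "y1 \<in> Rd d" unfolding y1_def using psb a by auto
    have y2d: "y2 \<in> Rd d" unfolding y2_def using p a by auto
    define r1 where "r1 = g y1 - g p - D (y1 - p)"
    define r2 where "r2 = g y2 - g p - D (y2 - p)"
    have r1: "norm r1 \<le> e * norm (y1 - p)" unfolding r1_def using d0b[OF y1d n1'] .
    have r2: "norm r2 \<le> e * norm (y2 - p)" unfolding r2_def using d0b[OF y2d n2'] .
    have phid: "g y1 \<bullet> a - g y2 \<bullet> a = s * (a \<bullet> D b) + (r1 - r2) \<bullet> a"
    proof -
      have "g y1 - g y2 = D (y1 - p) - D (y2 - p) + (r1 - r2)" unfolding r1_def r2_def by simp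
      also have "D (y1 - p) - D (y2 - p) = s *\<^sub>R D b"
        unfolding y1p y2p using lin by (simp add: linear_add linear_scale)
      finally have "g y1 - g y2 = s *\<^sub>R D b + (r1 - r2)" .
      then have "(g y1 - g y2) \<bullet> a = s * (D b \<bullet> a) + (r1 - r2) \<bullet> a" by (simp add: inner_add_left)
      then show ?thesis by (simp add: inner_diff_left inner_diff_right inner_commute)
    qed
    have rb: "\<bar>(r1 - r2) \<bullet> a\<bar> \<le> e * s * (norm a * (2 * norm a + norm b))"
    proof -
      have "\<bar>(r1 - r2) \<bullet> a\<bar> \<le> norm (r1 - r2) * norm a" by (rule Cauchy_Schwarz_ineq2)
      also have "\<dots> \<le> (norm r1 + norm r2) * norm a" by (intro mult_right_mono norm_triangle_ineq4) auto
      also have "\<dots> \<le> (e * norm (y1 - p) + e * norm (y2 - p)) * norm a"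
        using r1 r2 by (intro mult_right_mono add_mono) auto
      also have "\<dots> \<le> (e * (s * (2 * norm a + norm b) - s * norm a) + e * (s * norm a)) * norm a"
        using n1 n2 e by (intro mult_right_mono add_mono mult_left_mono) auto
      also have "\<dots> = e * s * (norm a * (2 * norm a + norm b))" by (simp add: algebra_simps)
      finally show ?thesis .
    qed
    have "(f (p + s *\<^sub>R a + s *\<^sub>R b) - f (p + s *\<^sub>R a) - f (p + s *\<^sub>R b) + f p) - s\<^sup>2 * (a \<bullet> D b)
        = s * ((r1 - r2) \<bullet> a)"
      using xi(3) phid unfolding Delta y1_def[symmetric] y2_def[symmetric]
      by (simp add: power2_eq_square algebra_simps)
    then have "\<bar>(f (p + s *\<^sub>R a + s *\<^sub>R b) - f (p + s *\<^sub>R a) - f (p + s *\<^sub>R b) + f p) - s\<^sup>2 * (a \<bullet> D b)\<bar>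
        = s * \<bar>(r1 - r2) \<bullet> a\<bar>" using s by (simp add: abs_mult)
    also have "\<dots> \<le> s * (e * s * (norm a * (2 * norm a + norm b)))"
      using rb s by (intro mult_left_mono) auto
    finally show "\<bar>(f (p + s *\<^sub>R a + s *\<^sub>R b) - f (p + s *\<^sub>R a) - f (p + s *\<^sub>R b) + f p) - s\<^sup>2 * (a \<bullet> D b)\<bar>
      \<le> e * s\<^sup>2 * (norm a * (2 * norm a + norm b))"
      by (simp add: power2_eq_square mult_ac)
  qed
qed

lemma hess_sym:
  fixes f :: "fvec \<Rightarrow> real"
  assumes gr: "\<And>y. y \<in> Rd d \<Longrightarrow> has_grad d f (g y) y"
    and D: "(g has_derivative D) (at p within Rd d)" and p: "p \<in> Rd d"
    and a: "a \<in> Rd d" and b: "b \<in> Rd d"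
  shows "a \<bullet> D b = b \<bullet> D a"
proof (rule ccontr)
  assume ne: "a \<bullet> D b \<noteq> b \<bullet> D a"
  define C1 where "C1 = norm a * (2 * norm a + norm b)"
  define C2 where "C2 = norm b * (2 * norm b + norm a)"
  have C1: "0 \<le> C1" "0 \<le> C2" unfolding C1_def C2_def by auto
  define e where "e = \<bar>a \<bullet> D b - b \<bullet> D a\<bar> / (2 * (C1 + C2 + 1))"
  have e: "0 < e" unfolding e_def using ne C1 by (intro divide_pos_pos) auto
  obtain \<delta>1 where d1: "\<delta>1 > 0" "\<And>s. 0 < s \<and> s < \<delta>1 \<Longrightarrow>
    \<bar>(f (p + s *\<^sub>R a + s *\<^sub>R b) - f (p + s *\<^sub>R a) - f (p + s *\<^sub>R b) + f p) - s\<^sup>2 * (a \<bullet> D b)\<bar>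
      \<le> e * s\<^sup>2 * C1"
    using hess_claim[OF gr D p a b e] unfolding C1_def by blast
  obtain \<delta>2 where d2: "\<delta>2 > 0" "\<And>s. 0 < s \<and> s < \<delta>2 \<Longrightarrow>
    \<bar>(f (p + s *\<^sub>R b + s *\<^sub>R a) - f (p + s *\<^sub>R b) - f (p + s *\<^sub>R a) + f p) - s\<^sup>2 * (b \<bullet> D a)\<bar>
      \<le> e * s\<^sup>2 * C2"
    using hess_claim[OF gr D p b a e] unfolding C2_def by blast
  define s where "s = min \<delta>1 \<delta>2 / 2"
  have s: "0 < s" "s < \<delta>1" "s < \<delta>2" unfolding s_def using d1 d2 by auto
  define X where "X = f (p + s *\<^sub>R a + s *\<^sub>R b) - f (p + s *\<^sub>R a) - f (p + s *\<^sub>R b) + f p"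
  have X2: "f (p + s *\<^sub>R b + s *\<^sub>R a) - f (p + s *\<^sub>R b) - f (p + s *\<^sub>R a) + f p = X"
    unfolding X_def by (simp add: ac_simps)
  have h1: "\<bar>X - s\<^sup>2 * (a \<bullet> D b)\<bar> \<le> e * s\<^sup>2 * C1" using d1(2)[of s] s unfolding X_def by auto
  have h2: "\<bar>X - s\<^sup>2 * (b \<bullet> D a)\<bar> \<le> e * s\<^sup>2 * C2" using d2(2)[of s] s X2 by auto
  have "s\<^sup>2 * \<bar>a \<bullet> D b - b \<bullet> D a\<bar> = \<bar>(X - s\<^sup>2 * (b \<bullet> D a)) - (X - s\<^sup>2 * (a \<bullet> D b))\<bar>"
  proof -
    have "(X - s\<^sup>2 * (b \<bullet> D a)) - (X - s\<^sup>2 * (a \<bullet> D b)) = s\<^sup>2 * (a \<bullet> D b - b \<bullet> D a)"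
      by (simp add: algebra_simps)
    then show ?thesis by (simp add: abs_mult)
  qed
  also have "\<dots> \<le> e * s\<^sup>2 * C1 + e * s\<^sup>2 * C2" using h1 h2 by linarith
  also have "\<dots> = s\<^sup>2 * (e * (C1 + C2))" by (simp add: algebra_simps)
  finally have "\<bar>a \<bullet> D b - b \<bullet> D a\<bar> \<le> e * (C1 + C2)" using s by simp
  also have "\<dots> < \<bar>a \<bullet> D b - b \<bullet> D a\<bar>"
  proof -
    have "e * (C1 + C2) = \<bar>a \<bullet> D b - b \<bullet> D a\<bar> * ((C1 + C2) / (2 * (C1 + C2 + 1)))"
      unfolding e_def by simp
    also have "\<dots> < \<bar>a \<bullet> D b - b \<bullet> D a\<bar> * 1"
      using ne C1 by (intro mult_strict_left_mono) (auto simp: field_simps)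
    finally show ?thesis by simp
  qed
  finally show False by simp
qed

lemma deriv_norm_bound:
  assumes D: "(g has_derivative D) (at p within Rd d)" and p: "p \<in> Rd d"
    and lip: "\<And>y. y \<in> Rd d \<Longrightarrow> norm (g y - g p) \<le> L * norm (y - p)"
    and v: "v \<in> Rd d"
  shows "norm (D v) \<le> L * norm v"
proof (rule field_le_epsilon)
  fix e :: real assume e: "0 < e"
  have lin: "linear D" using D by (rule has_derivative_linear)
  show "norm (D v) \<le> L * norm v + e"
  proof (cases "v = 0")
    case True then show ?thesis using lin e by (simp add: linear_0)
  next
    case False
    then have nv: "0 < norm v" by simp
    define e' where "e' = e / norm v"
    have e': "0 < e'" unfolding e'_def using e nv by simp
    obtain \<delta> where dl: "\<delta> > 0"
      and db: "\<And>y. y \<in> Rd d \<Longrightarrow> norm (y - p) < \<delta> \<Longrightarrow> norm (g y - g p - D (y - p)) \<le> e' * norm (y - p)"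
      using D e' unfolding has_derivative_within_alt by blast
    define t where "t = \<delta> / (2 * norm v)"
    have t: "0 < t" unfolding t_def using dl nv by simp
    have ty: "norm ((p + t *\<^sub>R v) - p) < \<delta>" using t nv dl by (simp add: t_def)
    have yd: "p + t *\<^sub>R v \<in> Rd d" using p v by auto
    have "t * norm (D v) = norm (D ((p + t *\<^sub>R v) - p))" using t lin by (simp add: linear_scale)
    also have "\<dots> \<le> norm (g (p + t *\<^sub>R v) - g p) + norm (g (p + t *\<^sub>R v) - g p - D ((p + t *\<^sub>R v) - p))"
      by (rule order_trans[OF _ norm_triangle_ineq4[of "g (p + t *\<^sub>R v) - g p" "g (p + t *\<^sub>R v) - g p - D ((p + t *\<^sub>R v) - p)"]]) simp
    also have "\<dots> \<le> L * norm (t *\<^sub>R v) + e' * norm (t *\<^sub>R v)"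
      using lip[OF yd] db[OF yd ty] by (intro add_mono) auto
    also have "\<dots> = t * (L * norm v + e)" using t nv by (simp add: e'_def algebra_simps)
    finally show ?thesis using t by simp
  qed
qed

lemma deriv_lower:
  assumes "(g has_derivative D) (at p within Rd d)" "p \<in> Rd d"
    "\<And>y. y \<in> Rd d \<Longrightarrow> norm (g y - g p) \<le> L * norm (y - p)" "v \<in> Rd d"
  shows "- (L * (norm v)\<^sup>2) \<le> v \<bullet> D v"
proof -
  have "\<bar>v \<bullet> D v\<bar> \<le> norm v * norm (D v)" by (rule Cauchy_Schwarz_ineq2)
  also have "\<dots> \<le> norm v * (L * norm v)" by (intro mult_left_mono deriv_norm_bound[OF assms]) auto
  finally show ?thesis by (simp add: power2_eq_square mult_ac)
qed

lemma polar_bound: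
  fixes B H :: "fvec \<Rightarrow> fvec"
  assumes B: "linear B" and Bs: "\<And>a b. a \<in> Rd d \<Longrightarrow> b \<in> Rd d \<Longrightarrow> a \<bullet> B b = b \<bullet> B a"
    and H: "psd_op d H" and L: "0 < L"
    and BQ: "\<And>z. z \<in> Rd d \<Longrightarrow> \<bar>z \<bullet> B z\<bar> \<le> L * (norm z)\<^sup>2 + z \<bullet> H z"
    and e: "e \<in> Rd d" and x: "x \<in> Rd d"
  shows "\<bar>e \<bullet> B x\<bar> \<le> sqrt (L * (norm e)\<^sup>2 + e \<bullet> H e) * sqrt (L * (norm x)\<^sup>2 + x \<bullet> H x)"
proof -
  define Q where "Q = (\<lambda>z. L * (norm z)\<^sup>2 + z \<bullet> H z)"
  have Hl: "linear H" and Hs: "\<And>a b. a \<in> Rd d \<Longrightarrow> b \<in> Rd d \<Longrightarrow> a \<bullet> H b = H a \<bullet> b"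
    and Hp: "\<And>z. z \<in> Rd d \<Longrightarrow> 0 \<le> z \<bullet> H z"
    using H by (auto simp: psd_op_def sym_op_def)
  have par: "Q (a + b) + Q (a - b) = 2 * Q a + 2 * Q b" if "a \<in> Rd d" "b \<in> Rd d" for a b
  proof -
    have "a \<bullet> H b = b \<bullet> H a" using Hs[OF that] by (simp add: inner_commute)
    then show ?thesis unfolding Q_def using Hl
      by (simp add: linear_add linear_diff inner_add_left inner_add_right inner_diff_left inner_diff_right
          power2_norm_eq_inner algebra_simps)
  qed
  have key: "\<bar>e \<bullet> B x\<bar> \<le> (t\<^sup>2 * Q e + Q x / t\<^sup>2) / 2" if t: "0 < t" for t
  proof -
    define a where "a = t *\<^sub>R e" define b where "b = (1/t) *\<^sub>R x"
    have ab: "a \<in> Rd d" "b \<in> Rd d" unfolding a_def b_def using e x by auto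
    have sy: "a \<bullet> B b = b \<bullet> B a" using Bs[OF ab] .
    have "4 * (a \<bullet> B b) = (a + b) \<bullet> B (a + b) - (a - b) \<bullet> B (a - b)"
      using B sy by (simp add: linear_add linear_diff inner_add_left inner_add_right inner_diff_left
          inner_diff_right algebra_simps)
    then have "4 * \<bar>a \<bullet> B b\<bar> \<le> \<bar>(a + b) \<bullet> B (a + b)\<bar> + \<bar>(a - b) \<bullet> B (a - b)\<bar>" by linarith
    also have "\<dots> \<le> Q (a + b) + Q (a - b)" unfolding Q_def using ab by (intro add_mono BQ) auto
    also have "\<dots> = 2 * Q a + 2 * Q b" using par[OF ab] .
    finally have "2 * \<bar>a \<bullet> B b\<bar> \<le> Q a + Q b" by linarith
    moreover have "a \<bullet> B b = e \<bullet> B x" unfolding a_def b_def using B t by (simp add: linear_scale)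
    moreover have "Q a = t\<^sup>2 * Q e" "Q b = Q x / t\<^sup>2" unfolding a_def b_def Q_def using Hl t
      by (simp_all add: linear_scale power2_eq_square field_simps)
    ultimately show ?thesis by simp
  qed
  show ?thesis
  proof (cases "e = 0 \<or> x = 0")
    case True then show ?thesis using B by (auto simp: linear_0)
  next
    case False
    have Qe: "0 < Q e" unfolding Q_def using False L Hp[OF e] by (intro add_pos_nonneg) auto
    have Qx: "0 < Q x" unfolding Q_def using False L Hp[OF x] by (intro add_pos_nonneg) auto
    define A where "A = sqrt (Q e)" define C where "C = sqrt (Q x)"
    have A: "0 < A" "A * A = Q e" unfolding A_def using Qe by auto
    have C: "0 < C" "C * C = Q x" unfolding C_def using Qx by auto
    define t where "t = sqrt (C / A)"
    have t: "0 < t" "t\<^sup>2 = C / A" unfolding t_def using A C by auto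
    have "\<bar>e \<bullet> B x\<bar> \<le> (t\<^sup>2 * Q e + Q x / t\<^sup>2) / 2" by (rule key[OF t(1)])
    also have "t\<^sup>2 * Q e + Q x / t\<^sup>2 = 2 * (A * C)"
    proof -
      have "t\<^sup>2 * Q e = C * A" unfolding t(2) A(2)[symmetric] using A by (simp add: field_simps)
      moreover have "Q x / t\<^sup>2 = C * A" unfolding t(2) C(2)[symmetric] using A C by (simp add: field_simps)
      ultimately show ?thesis by simp
    qed
    finally show ?thesis unfolding Q_def A_def C_def by simp
  qed
qed

lemma psd_facts:
  assumes "psd_op d H"
  shows "linear H" "\<And>v. v \<in> Rd d \<Longrightarrow> H v \<in> Rd d"
    "\<And>a b. a \<in> Rd d \<Longrightarrow> b \<in> Rd d \<Longrightarrow> a \<bullet> H b = H a \<bullet> b"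
    "\<And>z. z \<in> Rd d \<Longrightarrow> 0 \<le> z \<bullet> H z"
  using assms by (auto simp: psd_op_def sym_op_def)

lemma psd_cs:
  assumes H: "psd_op d H" and a: "a \<in> Rd d" and b: "b \<in> Rd d"
  shows "(a \<bullet> H b)\<^sup>2 \<le> (a \<bullet> H a) * (b \<bullet> H b)"
proof -
  note Hf = psd_facts[OF H]
  define \<alpha> where "\<alpha> = a \<bullet> H a" define \<beta> where "\<beta> = b \<bullet> H b" define \<gamma> where "\<gamma> = a \<bullet> H b"
  have ba: "b \<bullet> H a = \<gamma>" unfolding \<gamma>_def using Hf(3)[OF a b] by (simp add: inner_commute)
  have q: "0 \<le> \<alpha> + 2 * t * \<gamma> + t\<^sup>2 * \<beta>" for t
  proof -
    have "0 \<le> (a + t *\<^sub>R b) \<bullet> H (a + t *\<^sub>R b)" using a b by (intro Hf(4)) auto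
    also have "\<dots> = \<alpha> + 2 * t * \<gamma> + t\<^sup>2 * \<beta>"
      using Hf(1) ba unfolding \<alpha>_def \<beta>_def \<gamma>_def
      by (simp add: linear_add linear_scale inner_add_left inner_add_right power2_eq_square algebra_simps)
    finally show ?thesis .
  qed
  have b0: "0 \<le> \<beta>" unfolding \<beta>_def using Hf(4)[OF b] .
  show ?thesis
  proof (cases "\<beta> = 0")
    case True
    have "\<gamma> = 0"
    proof (rule ccontr)
      assume g: "\<gamma> \<noteq> 0"
      have "0 \<le> \<alpha> + 2 * (- (\<alpha> + 1) / (2 * \<gamma>)) * \<gamma>" using q[of "- (\<alpha> + 1) / (2 * \<gamma>)"] True by simp
      also have "\<dots> = -1" using g by (simp add: field_simps)
      finally show False by simp
    qed
    then show ?thesis using True unfolding \<alpha>_def \<beta>_def \<gamma>_def[symmetric] by simp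
  next
    case False
    then have bp: "0 < \<beta>" using b0 by simp
    have "0 \<le> \<alpha> + 2 * (- \<gamma> / \<beta>) * \<gamma> + (- \<gamma> / \<beta>)\<^sup>2 * \<beta>" by (rule q)
    also have "\<dots> = \<alpha> - \<gamma>\<^sup>2 / \<beta>" using bp by (simp add: field_simps power2_eq_square)
    finally have "\<gamma>\<^sup>2 / \<beta> \<le> \<alpha>" by simp
    then have "\<gamma>\<^sup>2 \<le> \<alpha> * \<beta>" using bp by (simp add: divide_le_eq)
    then show ?thesis unfolding \<alpha>_def \<beta>_def \<gamma>_def by simp
  qed
qed

lemma psd_cs_sqrt:
  assumes H: "psd_op d H" and a: "a \<in> Rd d" and b: "b \<in> Rd d"
  shows "\<bar>a \<bullet> H b\<bar> \<le> sqrt (a \<bullet> H a) * sqrt (b \<bullet> H b)"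
proof -
  have "sqrt ((a \<bullet> H b)\<^sup>2) \<le> sqrt ((a \<bullet> H a) * (b \<bullet> H b))"
    using psd_cs[OF assms] by (rule real_sqrt_le_mono)
  then show ?thesis using psd_facts(4)[OF H a] psd_facts(4)[OF H b] by (simp add: real_sqrt_mult)
qed

lemma Rd_vec_of_vx: "z \<in> Rd d \<Longrightarrow> vec_of d (vx z) = z"
  by (intro fvec_eqI) (auto simp: vx_vec_of Rd_def)

lemma psd_trace:
  assumes H: "psd_op d H" and z: "z \<in> Rd d"
  shows "z \<bullet> H z \<le> (norm z)\<^sup>2 * trace_op d H"
proof -
  note Hf = psd_facts[OF H]
  define s where "s = (\<lambda>i. sqrt (std_basis i \<bullet> H (std_basis i)))"
  define c where "c = (\<lambda>i. \<bar>vx z i\<bar>)"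
  have hij: "vx z i * vx z j * (std_basis i \<bullet> H (std_basis j)) \<le> (c i * s i) * (c j * s j)"
    if "i < d" "j < d" for i j
  proof -
    have "vx z i * vx z j * (std_basis i \<bullet> H (std_basis j)) \<le> \<bar>vx z i * vx z j * (std_basis i \<bullet> H (std_basis j))\<bar>"
      by simp
    also have "\<dots> = c i * c j * \<bar>std_basis i \<bullet> H (std_basis j)\<bar>" by (simp add: c_def abs_mult)
    also have "\<dots> \<le> c i * c j * (s i * s j)"
      unfolding s_def using that
      by (intro mult_left_mono psd_cs_sqrt[OF H]) (auto simp: c_def std_basis_Rd)
    finally show ?thesis by (simp add: mult_ac)
  qed
  have "z \<bullet> H z = (\<Sum>i<d. \<Sum>j<d. vx z i * vx z j * (std_basis i \<bullet> H (std_basis j)))"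
    using quad_expand[OF Hf(1), of d "vx z"] by (simp add: Rd_vec_of_vx[OF z])
  also have "\<dots> \<le> (\<Sum>i<d. \<Sum>j<d. (c i * s i) * (c j * s j))"
    by (intro sum_mono hij) auto
  also have "\<dots> = (\<Sum>i<d. c i * s i)\<^sup>2" by (simp add: power2_eq_square sum_product)
  also have "\<dots> \<le> (\<Sum>i<d. (c i)\<^sup>2) * (\<Sum>i<d. (s i)\<^sup>2)" by (rule Cauchy_Schwarz_ineq_sum)
  also have "(\<Sum>i<d. (c i)\<^sup>2) = (norm z)\<^sup>2" using norm_sq_Rd[OF z] by (simp add: c_def)
  also have "(\<Sum>i<d. (s i)\<^sup>2) = trace_op d H"
    unfolding s_def trace_op_def using Hf(4) by (intro sum.cong refl) (auto simp: std_basis_Rd)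
  finally show ?thesis .
qed

lemma psd_op_bound:
  assumes H: "psd_op d H" and K: "\<And>z. z \<in> Rd d \<Longrightarrow> z \<bullet> H z \<le> K * (norm z)\<^sup>2" and K0: "0 \<le> K"
    and v: "v \<in> Rd d"
  shows "norm (H v) \<le> K * norm v"
proof -
  note Hf = psd_facts[OF H]
  define w where "w = H v"
  have w: "w \<in> Rd d" unfolding w_def using Hf(2)[OF v] .
  have "(norm w)\<^sup>2 = v \<bullet> H w" using Hf(3)[OF v w] by (simp add: w_def power2_norm_eq_inner)
  also have "\<dots> \<le> sqrt (v \<bullet> H v) * sqrt (w \<bullet> H w)" using psd_cs_sqrt[OF H v w] by simp
  also have "\<dots> \<le> sqrt (K * (norm v)\<^sup>2) * sqrt (K * (norm w)\<^sup>2)"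
    using K[OF v] K[OF w] Hf(4)[OF v] Hf(4)[OF w] by (intro mult_mono) auto
  also have "\<dots> = K * norm v * norm w" using K0 by (simp add: real_sqrt_mult)
  finally have "norm w * norm w \<le> (K * norm v) * norm w" by (simp add: power2_eq_square mult_ac)
  then show ?thesis unfolding w_def[symmetric]
    by (cases "norm w = 0") (use K0 in \<open>auto simp: mult_le_cancel_right\<close>)
qed

lemma opnorm_le:
  assumes d: "1 \<le> d" and K: "\<And>v. v \<in> Rd d \<Longrightarrow> norm (H v) \<le> K * norm v"
  shows "opnorm d H \<le> K"
  unfolding opnorm_def
proof (rule cSup_least)
  show "{norm (H v) |v. v \<in> Rd d \<and> norm v = 1} \<noteq> {}"
    using d norm_std_basis[of 0] std_basis_Rd[of 0 d] by auto
  show "x \<le> K" if "x \<in> {norm (H v) |v. v \<in> Rd d \<and> norm v = 1}" for x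
    using that K by force
qed

lemma H_facts:
  assumes H: "psd_op d H" and lw: "loewner_le d H (\<lambda>v. L *\<^sub>R v)" and op: "opnorm d H > 0"
    and idim: "intdim d H \<le> r" and d: "1 \<le> d" and L: "0 < L"
  shows "trace_op d H \<le> r * L" "1 \<le> r" "0 \<le> trace_op d H"
proof -
  note Hf = psd_facts[OF H]
  have tr0: "0 \<le> trace_op d H" unfolding trace_op_def using Hf(4) by (intro sum_nonneg) (auto simp: std_basis_Rd)
  have qL: "z \<bullet> H z \<le> L * (norm z)\<^sup>2" if "z \<in> Rd d" for z
    using lw that by (simp add: loewner_le_def power2_norm_eq_inner)
  have opL: "opnorm d H \<le> L"
    by (rule opnorm_le[OF d]) (rule psd_op_bound[OF H qL], auto simp: L less_imp_le)
  have opT: "opnorm d H \<le> trace_op d H"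
  proof (rule opnorm_le[OF d])
    have qT: "z \<bullet> H z \<le> trace_op d H * (norm z)\<^sup>2" if "z \<in> Rd d" for z
      using psd_trace[OF H that] by (simp add: mult.commute)
    fix v assume "v \<in> Rd d"
    then show "norm (H v) \<le> trace_op d H * norm v" using psd_op_bound[OF H qT tr0] by blast
  qed
  have tr: "trace_op d H \<le> r * opnorm d H" using idim op by (simp add: intdim_def divide_le_eq)
  show "1 \<le> r"
  proof -
    have "opnorm d H \<le> r * opnorm d H" using opT tr by linarith
    then show ?thesis using op by simp
  qed
  then show "trace_op d H \<le> r * L" using tr opL by (smt (verit) mult_left_mono)
  show "0 \<le> trace_op d H" by (rule tr0)
qed

lemma Rd_sum: "(\<And>i. i \<in> A \<Longrightarrow> f i \<in> Rd d) \<Longrightarrow> sum f A \<in> Rd d"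
  by (cases "finite A") (auto simp: Rd_def vx_sum)

lemma loss_grad:
  assumes N: "0 < N" and sm: "\<forall>i<N. smooth_with d L (Li i) (gi i)" and y: "y \<in> Rd d"
  shows "has_grad d (\<lambda>\<theta>. (\<Sum>i<N. Li i \<theta>) / real N) ((\<Sum>i<N. gi i y) /\<^sub>R real N) y"
proof -
  have g: "has_grad d (Li i) (gi i y) y" if "i < N" for i
    using sm that y by (auto simp: smooth_with_def)
  have gR: "gi i y \<in> Rd d" if "i < N" for i using g[OF that] by (simp add: has_grad_def)
  have sR: "(\<Sum>i<N. gi i y) \<in> Rd d" by (rule Rd_sum) (use gR in auto)
  have d: "((\<lambda>\<theta>. (\<Sum>i<N. Li i \<theta>) / real N) has_derivative (\<lambda>h. (\<Sum>i<N. gi i y \<bullet> h) / real N)) (at y within Rd d)"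
  proof -
    have "((\<lambda>\<theta>. (\<Sum>i<N. Li i \<theta>)) has_derivative (\<lambda>h. (\<Sum>i<N. gi i y \<bullet> h))) (at y within Rd d)"
      using g by (intro has_derivative_sum) (auto simp: has_grad_def)
    from bounded_linear.has_derivative[OF bounded_linear_divide[of "real N"] this] show ?thesis by simp
  qed
  have "(\<lambda>h. (\<Sum>i<N. gi i y \<bullet> h) / real N) = (\<lambda>h. ((\<Sum>i<N. gi i y) /\<^sub>R real N) \<bullet> h)"
    by (simp add: inner_sum_left divide_inverse mult.commute)
  then show ?thesis using d sR by (simp add: has_grad_def Rd_scaleR)
qed

lemma gL_eq:
  assumes N: "0 < N" and sm: "\<forall>i<N. smooth_with d L (Li i) (gi i)"
    and hg: "\<forall>\<theta>\<in>Rd d. has_grad d (\<lambda>\<theta>. (\<Sum>i<N. Li i \<theta>) / real N) (gL \<theta>) \<theta>" and y: "y \<in> Rd d"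
  shows "gL y = (\<Sum>i<N. gi i y) /\<^sub>R real N"
  using grad_unique[OF hg[rule_format, OF y] loss_grad[OF N sm y] y] .

lemma gL_lip:
  assumes N: "0 < N" and sm: "\<forall>i<N. smooth_with d L (Li i) (gi i)"
    and hg: "\<forall>\<theta>\<in>Rd d. has_grad d (\<lambda>\<theta>. (\<Sum>i<N. Li i \<theta>) / real N) (gL \<theta>) \<theta>"
    and y: "y \<in> Rd d" and z: "z \<in> Rd d"
  shows "norm (gL y - gL z) \<le> L * norm (y - z)"
proof -
  have "gL y - gL z = (\<Sum>i<N. gi i y - gi i z) /\<^sub>R real N"
    using gL_eq[OF N sm hg y] gL_eq[OF N sm hg z] by (simp add: sum_subtractf scaleR_diff_right)
  then have "norm (gL y - gL z) = norm (\<Sum>i<N. gi i y - gi i z) / real N"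
    using N by (simp add: divide_inverse mult.commute)
  also have "\<dots> \<le> (\<Sum>i<N. norm (gi i y - gi i z)) / real N"
    using N by (intro divide_right_mono norm_sum) auto
  also have "\<dots> \<le> (\<Sum>i<N. L * norm (y - z)) / real N"
    using N sm y z by (intro divide_right_mono sum_mono) (auto simp: smooth_with_def)
  also have "\<dots> = L * norm (y - z)" using N by simp
  finally show ?thesis .
qed

lemma grad_cont:
  assumes "\<forall>\<theta>\<in>Rd d. has_grad d f (g \<theta>) \<theta>"
  shows "continuous_on (Rd d) f"
  unfolding continuous_on_eq_continuous_within
  using assms by (auto simp: has_grad_def intro: has_derivative_continuous)

lemma lip_cont:
  assumes "\<And>y z. y \<in> Rd d \<Longrightarrow> z \<in> Rd d \<Longrightarrow> norm (g y - g z) \<le> L * norm (y - z)"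
  shows "continuous_on (Rd d) g"
proof (rule continuous_onI)
  fix x e assume x: "x \<in> Rd d" and e: "(0::real) < e"
  show "\<exists>\<delta>>0. \<forall>x'\<in>Rd d. dist x' x < \<delta> \<longrightarrow> dist (g x') (g x) \<le> e"
  proof (intro exI[of _ "e / (\<bar>L\<bar> + 1)"] conjI ballI impI)
    show "0 < e / (\<bar>L\<bar> + 1)" using e by (simp add: add_nonneg_pos)
    fix x' assume x': "x' \<in> Rd d" and dl: "dist x' x < e / (\<bar>L\<bar> + 1)"
    have "dist (g x') (g x) \<le> L * dist x' x" using assms[OF x' x] by (simp add: dist_norm)
    also have "\<dots> \<le> (\<bar>L\<bar> + 1) * dist x' x" by (intro mult_right_mono) auto
    also have "\<dots> \<le> (\<bar>L\<bar> + 1) * (e / (\<bar>L\<bar> + 1))"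
      using dl by (intro mult_left_mono) auto
    also have "\<dots> = e" by (simp add: add_nonneg_pos)
    finally show "dist (g x') (g x) \<le> e" .
  qed
qed

lemma cont_shift:
  fixes F :: "fvec \<Rightarrow> 'b::topological_space"
  assumes "continuous_on (Rd d) F" "\<theta> \<in> Rd d"
  shows "continuous_on (Rd d) (\<lambda>y. F (\<theta> + \<mu> *\<^sub>R y))"
  by (rule continuous_on_compose2[OF assms(1)]) (use assms(2) in \<open>auto intro!: continuous_intros\<close>)

lemma Rd_shift[simp]: "\<theta> \<in> Rd d \<Longrightarrow> \<theta> + \<mu> *\<^sub>R vec_of d u \<in> Rd d"
  by (intro Rd_add Rd_scaleR vec_of_Rd)

lemma int_bound_norm:
  fixes f :: "(nat \<Rightarrow> real) \<Rightarrow> real"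
  assumes m: "f \<in> borel_measurable (gauss d)"
    and b: "\<And>u. \<bar>f u\<bar> \<le> A + B * norm (vec_of d u) + C * (norm (vec_of d u))\<^sup>2"
  shows "integrable (gauss d) f"
proof (rule Bochner_Integration.integrable_bound[OF _ m])
  show "integrable (gauss d) (\<lambda>u. A + B * norm (vec_of d u) + C * (norm (vec_of d u))\<^sup>2)"
    by (intro Bochner_Integration.integrable_add Bochner_Integration.integrable_mult_right
        int_const_gauss int_norm int_normsq)
  show "AE x in gauss d. norm (f x) \<le> norm (A + B * norm (vec_of d x) + C * (norm (vec_of d x))\<^sup>2)"
    using b by (intro AE_I2) (smt (verit) real_norm_def)
qed

lemma int_g_dir:
  fixes g :: "fvec \<Rightarrow> fvec"
  assumes lip: "\<And>y z. y \<in> Rd d \<Longrightarrow> z \<in> Rd d \<Longrightarrow> norm (g y - g z) \<le> L * norm (y - z)"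
    and \<theta>: "\<theta> \<in> Rd d" and c: "c \<in> Rd d"
  shows "integrable (gauss d) (\<lambda>u. g (\<theta> + \<mu> *\<^sub>R vec_of d u) \<bullet> c)"
proof (rule int_bound_norm)
  have "continuous_on (Rd d) (\<lambda>y. g (\<theta> + \<mu> *\<^sub>R y) \<bullet> c)"
    by (intro continuous_on_inner continuous_on_const cont_shift[OF lip_cont[OF lip] \<theta>])
  then show "(\<lambda>u. g (\<theta> + \<mu> *\<^sub>R vec_of d u) \<bullet> c) \<in> borel_measurable (gauss d)"
    by (rule meas_vec_of)
  fix u
  have y: "\<theta> + \<mu> *\<^sub>R vec_of d u \<in> Rd d" using \<theta> by auto
  have "\<bar>g (\<theta> + \<mu> *\<^sub>R vec_of d u) \<bullet> c\<bar> \<le> norm (g (\<theta> + \<mu> *\<^sub>R vec_of d u)) * norm c"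
    by (rule Cauchy_Schwarz_ineq2)
  also have "norm (g (\<theta> + \<mu> *\<^sub>R vec_of d u)) \<le> norm (g \<theta>) + L * (\<bar>\<mu>\<bar> * norm (vec_of d u))"
    using lip[OF y \<theta>] norm_triangle_ineq2[of "g (\<theta> + \<mu> *\<^sub>R vec_of d u)" "g \<theta>"] by simp
  finally show "\<bar>g (\<theta> + \<mu> *\<^sub>R vec_of d u) \<bullet> c\<bar> \<le> norm (g \<theta>) * norm c + (L * \<bar>\<mu>\<bar> * norm c) * norm (vec_of d u) + 0 * (norm (vec_of d u))\<^sup>2"
    by (simp add: algebra_simps mult_right_mono)
qed

lemma int_F:
  fixes F :: "fvec \<Rightarrow> real"
  assumes gr: "\<And>y. y \<in> Rd d \<Longrightarrow> has_grad d F (g y) y"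
    and lip: "\<And>y z. y \<in> Rd d \<Longrightarrow> z \<in> Rd d \<Longrightarrow> norm (g y - g z) \<le> L * norm (y - z)"
    and L: "0 \<le> L" and y: "y \<in> Rd d"
  shows "integrable (gauss d) (\<lambda>u. F (y + \<mu> *\<^sub>R vec_of d u))"
proof (rule int_bound_norm)
  have "continuous_on (Rd d) F" by (rule grad_cont) (use gr in auto)
  then show "(\<lambda>u. F (y + \<mu> *\<^sub>R vec_of d u)) \<in> borel_measurable (gauss d)"
    by (intro meas_vec_of cont_shift y)
  fix u
  have h: "\<mu> *\<^sub>R vec_of d u \<in> Rd d" by auto
  have t: "\<bar>F (y + \<mu> *\<^sub>R vec_of d u) - F y - g y \<bullet> (\<mu> *\<^sub>R vec_of d u)\<bar> \<le> L * (norm (\<mu> *\<^sub>R vec_of d u))\<^sup>2"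
    by (rule grad_taylor[OF gr lip y h L])
  have c: "\<bar>g y \<bullet> (\<mu> *\<^sub>R vec_of d u)\<bar> \<le> norm (g y) * (\<bar>\<mu>\<bar> * norm (vec_of d u))"
    using Cauchy_Schwarz_ineq2[of "g y" "\<mu> *\<^sub>R vec_of d u"] by simp
  have "\<bar>F (y + \<mu> *\<^sub>R vec_of d u)\<bar> \<le> \<bar>F y\<bar> + norm (g y) * (\<bar>\<mu>\<bar> * norm (vec_of d u)) + L * (norm (\<mu> *\<^sub>R vec_of d u))\<^sup>2"
    using t c by linarith
  then show "\<bar>F (y + \<mu> *\<^sub>R vec_of d u)\<bar> \<le> \<bar>F y\<bar> + (norm (g y) * \<bar>\<mu>\<bar>) * norm (vec_of d u) + (L * \<mu>\<^sup>2) * (norm (vec_of d u))\<^sup>2"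
    by (simp add: power_mult_distrib mult_ac)
qed

lemma gmu_inner:
  fixes g :: "fvec \<Rightarrow> fvec"
  assumes lip: "\<And>y z. y \<in> Rd d \<Longrightarrow> z \<in> Rd d \<Longrightarrow> norm (g y - g z) \<le> L * norm (y - z)"
    and \<theta>: "\<theta> \<in> Rd d" and c: "c \<in> Rd d"
  shows "vec_of d (\<lambda>i. \<integral>u. vx (g (\<theta> + \<mu> *\<^sub>R vec_of d u)) i \<partial>gauss d) \<bullet> c
    = (\<integral>u. g (\<theta> + \<mu> *\<^sub>R vec_of d u) \<bullet> c \<partial>gauss d)"
proof -
  have ii: "integrable (gauss d) (\<lambda>u. vx (g (\<theta> + \<mu> *\<^sub>R vec_of d u)) i)" if "i < d" for i
    using int_g_dir[OF lip \<theta> std_basis_Rd[OF that], of \<mu>] by (simp add: inner_std_basis2)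
  have "vec_of d (\<lambda>i. \<integral>u. vx (g (\<theta> + \<mu> *\<^sub>R vec_of d u)) i \<partial>gauss d) \<bullet> c
      = (\<Sum>i<d. (\<integral>u. vx (g (\<theta> + \<mu> *\<^sub>R vec_of d u)) i \<partial>gauss d) * vx c i)"
    using inner_Rd[of "vec_of d (\<lambda>i. \<integral>u. vx (g (\<theta> + \<mu> *\<^sub>R vec_of d u)) i \<partial>gauss d)" d c]
    by (simp add: vx_vec_of)
  also have "\<dots> = (\<Sum>i<d. \<integral>u. vx (g (\<theta> + \<mu> *\<^sub>R vec_of d u)) i * vx c i \<partial>gauss d)"
    by (intro sum.cong refl) simp
  also have "\<dots> = (\<integral>u. (\<Sum>i<d. vx (g (\<theta> + \<mu> *\<^sub>R vec_of d u)) i * vx c i) \<partial>gauss d)"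
    by (rule Bochner_Integration.integral_sum[symmetric]) (auto intro!: ii)
  also have "\<dots> = (\<integral>u. g (\<theta> + \<mu> *\<^sub>R vec_of d u) \<bullet> c \<partial>gauss d)"
    by (intro Bochner_Integration.integral_cong refl) (simp add: inner_Rd[OF disjI2[OF c]])
  finally show ?thesis .
qed

lemma smoothed_grad:
  fixes F :: "fvec \<Rightarrow> real"
  assumes gr: "\<And>y. y \<in> Rd d \<Longrightarrow> has_grad d F (g y) y"
    and lip: "\<And>y z. y \<in> Rd d \<Longrightarrow> z \<in> Rd d \<Longrightarrow> norm (g y - g z) \<le> L * norm (y - z)"
    and L: "0 < L" and \<theta>: "\<theta> \<in> Rd d"
  shows "has_grad d (smoothed d \<mu> F) (vec_of d (\<lambda>i. \<integral>u. vx (g (\<theta> + \<mu> *\<^sub>R vec_of d u)) i \<partial>gauss d)) \<theta>"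
proof -
  define gm where "gm = vec_of d (\<lambda>i. \<integral>u. vx (g (\<theta> + \<mu> *\<^sub>R vec_of d u)) i \<partial>gauss d)"
  interpret P: prob_space "gauss d" by (rule prob_gauss)
  have key: "\<bar>smoothed d \<mu> F (\<theta> + h) - smoothed d \<mu> F \<theta> - gm \<bullet> h\<bar> \<le> L * (norm h)\<^sup>2"
    if h: "h \<in> Rd d" for h
  proof -
    have i1: "integrable (gauss d) (\<lambda>u. F ((\<theta> + h) + \<mu> *\<^sub>R vec_of d u))"
      using int_F[OF gr lip _ Rd_add[OF \<theta> h]] L by simp
    have i2: "integrable (gauss d) (\<lambda>u. F (\<theta> + \<mu> *\<^sub>R vec_of d u))"
      using int_F[OF gr lip _ \<theta>] L by simp
    have i3: "integrable (gauss d) (\<lambda>u. g (\<theta> + \<mu> *\<^sub>R vec_of d u) \<bullet> h)"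
      by (rule int_g_dir[OF lip \<theta> h])
    have EQ: "smoothed d \<mu> F (\<theta> + h) - smoothed d \<mu> F \<theta> - gm \<bullet> h =
        (\<integral>u. F ((\<theta> + h) + \<mu> *\<^sub>R vec_of d u) - F (\<theta> + \<mu> *\<^sub>R vec_of d u) - g (\<theta> + \<mu> *\<^sub>R vec_of d u) \<bullet> h \<partial>gauss d)"
    proof -
      have gi: "gm \<bullet> h = (\<integral>u. g (\<theta> + \<mu> *\<^sub>R vec_of d u) \<bullet> h \<partial>gauss d)"
        unfolding gm_def by (rule gmu_inner[OF lip \<theta> h])
      have e1: "(\<integral>u. F ((\<theta> + h) + \<mu> *\<^sub>R vec_of d u) - F (\<theta> + \<mu> *\<^sub>R vec_of d u) \<partial>gauss d)
          = (\<integral>u. F ((\<theta> + h) + \<mu> *\<^sub>R vec_of d u) \<partial>gauss d) - (\<integral>u. F (\<theta> + \<mu> *\<^sub>R vec_of d u) \<partial>gauss d)"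
        by (rule Bochner_Integration.integral_diff[OF i1 i2])
      have e2: "(\<integral>u. F ((\<theta> + h) + \<mu> *\<^sub>R vec_of d u) - F (\<theta> + \<mu> *\<^sub>R vec_of d u) - g (\<theta> + \<mu> *\<^sub>R vec_of d u) \<bullet> h \<partial>gauss d)
          = (\<integral>u. F ((\<theta> + h) + \<mu> *\<^sub>R vec_of d u) - F (\<theta> + \<mu> *\<^sub>R vec_of d u) \<partial>gauss d) - (\<integral>u. g (\<theta> + \<mu> *\<^sub>R vec_of d u) \<bullet> h \<partial>gauss d)"
        by (rule Bochner_Integration.integral_diff[OF Bochner_Integration.integrable_diff[OF i1 i2] i3])
      show ?thesis unfolding e2 e1 gi smoothed_def by simp
    qed
    have "\<bar>smoothed d \<mu> F (\<theta> + h) - smoothed d \<mu> F \<theta> - gm \<bullet> h\<bar> \<le> (\<integral>u. \<bar>F ((\<theta> + h) + \<mu> *\<^sub>R vec_of d u) - F (\<theta> + \<mu> *\<^sub>R vec_of d u) - g (\<theta> + \<mu> *\<^sub>R vec_of d u) \<bullet> h\<bar> \<partial>gauss d)"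
      unfolding EQ by (rule integral_abs_bound)
    also have "\<dots> \<le> (\<integral>u. L * (norm h)\<^sup>2 \<partial>gauss d)"
    proof (rule integral_mono)
      show "integrable (gauss d) (\<lambda>u. \<bar>F ((\<theta> + h) + \<mu> *\<^sub>R vec_of d u) - F (\<theta> + \<mu> *\<^sub>R vec_of d u) - g (\<theta> + \<mu> *\<^sub>R vec_of d u) \<bullet> h\<bar>)"
        by (intro integrable_abs Bochner_Integration.integrable_diff i1 i2 i3)
      show "integrable (gauss d) (\<lambda>u. L * (norm h)\<^sup>2)" by (rule int_const_gauss)
      fix u
      have y: "\<theta> + \<mu> *\<^sub>R vec_of d u \<in> Rd d" using \<theta> by simp
      have eq: "(\<theta> + h) + \<mu> *\<^sub>R vec_of d u = (\<theta> + \<mu> *\<^sub>R vec_of d u) + h" by (simp add: ac_simps)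
      have gt: "\<bar>F ((\<theta> + \<mu> *\<^sub>R vec_of d u) + h) - F (\<theta> + \<mu> *\<^sub>R vec_of d u) - g (\<theta> + \<mu> *\<^sub>R vec_of d u) \<bullet> h\<bar>
          \<le> L * (norm h)\<^sup>2"
        by (rule grad_taylor[OF gr lip y h less_imp_le[OF assms(3)]])
      show "\<bar>F ((\<theta> + h) + \<mu> *\<^sub>R vec_of d u) - F (\<theta> + \<mu> *\<^sub>R vec_of d u) - g (\<theta> + \<mu> *\<^sub>R vec_of d u) \<bullet> h\<bar>
          \<le> L * (norm h)\<^sup>2"
        unfolding eq by (rule gt)
    qed
    also have "\<dots> = L * (norm h)\<^sup>2" by (simp add: P.prob_space)
    finally show ?thesis .
  qed
  have "(smoothed d \<mu> F has_derivative (\<lambda>h. gm \<bullet> h)) (at \<theta> within Rd d)"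
    unfolding has_derivative_within_alt
  proof (intro conjI allI impI bounded_linear_inner_right)
    fix e :: real assume e: "0 < e"
    show "\<exists>\<delta>>0. \<forall>y\<in>Rd d. norm (y - \<theta>) < \<delta> \<longrightarrow>
        norm (smoothed d \<mu> F y - smoothed d \<mu> F \<theta> - gm \<bullet> (y - \<theta>)) \<le> e * norm (y - \<theta>)"
    proof (intro exI[of _ "e / L"] conjI ballI impI)
      show "0 < e / L" using e L by simp
      fix y assume y: "y \<in> Rd d" and dy: "norm (y - \<theta>) < e / L"
      have h: "y - \<theta> \<in> Rd d" using y \<theta> by auto
      have "norm (smoothed d \<mu> F y - smoothed d \<mu> F \<theta> - gm \<bullet> (y - \<theta>)) \<le> L * (norm (y - \<theta>))\<^sup>2"
        using key[OF h] by simp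
      also have "\<dots> = (L * norm (y - \<theta>)) * norm (y - \<theta>)" by (simp add: power2_eq_square)
      also have "\<dots> \<le> e * norm (y - \<theta>)"
      proof (intro mult_right_mono)
        have "L * norm (y - \<theta>) \<le> L * (e / L)" using dy L by (intro mult_left_mono) auto
        then show "L * norm (y - \<theta>) \<le> e" using L by simp
      qed simp
      finally show "norm (smoothed d \<mu> F y - smoothed d \<mu> F \<theta> - gm \<bullet> (y - \<theta>)) \<le> e * norm (y - \<theta>)" .
    qed
  qed
  then show ?thesis unfolding has_grad_def gm_def by simp
qed

lemma second_diff:
  fixes F :: "fvec \<Rightarrow> real" and g :: "fvec \<Rightarrow> fvec"
  assumes gr: "\<And>y. y \<in> Rd d \<Longrightarrow> has_grad d F (g y) y"
    and lip: "\<And>y z. y \<in> Rd d \<Longrightarrow> z \<in> Rd d \<Longrightarrow> norm (g y - g z) \<le> L * norm (y - z)"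
    and L: "0 < L" and H: "psd_op d H" and lw: "loewner_le d H (\<lambda>v. L *\<^sub>R v)"
    and DD: "\<And>p. p \<in> Rd d \<Longrightarrow> norm (p - \<theta>) \<le> R \<Longrightarrow>
        (g has_derivative DD p) (at p within Rd d) \<and> loewner_le d (DD p) H"
    and \<theta>: "\<theta> \<in> Rd d" and e: "e \<in> Rd d" "norm e = 1" and x: "x \<in> Rd d" "norm x \<le> R"
  shows "\<bar>e \<bullet> (g (\<theta> + x) + g (\<theta> - x) - 2 *\<^sub>R g \<theta>)\<bar> \<le> sqrt (2 * L) * sqrt (L * (norm x)\<^sup>2 + x \<bullet> H x)"
proof -
  note Hf = psd_facts[OF H]
  have mx: "- x \<in> Rd d" using x by auto
  define k where "k = (\<lambda>t. e \<bullet> g (\<theta> + t *\<^sub>R x) + e \<bullet> g (\<theta> + t *\<^sub>R (- x)))"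
  define p1 where "p1 = (\<lambda>t. \<theta> + t *\<^sub>R x)"
  define p2 where "p2 = (\<lambda>t. \<theta> + t *\<^sub>R (- x))"
  have pin: "p1 t \<in> Rd d" "p2 t \<in> Rd d" "norm (p1 t - \<theta>) \<le> R" "norm (p2 t - \<theta>) \<le> R"
    if "0 \<le> t" "t \<le> 1" for t
  proof -
    show "p1 t \<in> Rd d" "p2 t \<in> Rd d" unfolding p1_def p2_def using \<theta> x by auto
    have "t * norm x \<le> 1 * norm x" using that by (intro mult_right_mono) auto
    then show "norm (p1 t - \<theta>) \<le> R" "norm (p2 t - \<theta>) \<le> R"
      unfolding p1_def p2_def using that x by auto
  qed
  have der: "DERIV k t :> (e \<bullet> DD (p1 t) x - e \<bullet> DD (p2 t) x)" if t: "0 \<le> t" "t \<le> 1" for t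
  proof -
    have D1: "(g has_derivative DD (p1 t)) (at (\<theta> + t *\<^sub>R x) within Rd d)"
      using DD[OF pin(1,3)[OF t]] by (simp add: p1_def)
    have D2: "(g has_derivative DD (p2 t)) (at (\<theta> + t *\<^sub>R (- x)) within Rd d)"
      using DD[OF pin(2,4)[OF t]] by (simp add: p2_def)
    have E1: "((\<lambda>z. e \<bullet> g z) has_derivative (\<lambda>h. e \<bullet> DD (p1 t) h)) (at (\<theta> + t *\<^sub>R x) within Rd d)"
      by (rule has_derivative_inner_right[OF D1])
    have E2: "((\<lambda>z. e \<bullet> g z) has_derivative (\<lambda>h. e \<bullet> DD (p2 t) h)) (at (\<theta> + t *\<^sub>R (- x)) within Rd d)"
      by (rule has_derivative_inner_right[OF D2])
    have l2: "linear (DD (p2 t))" using D2 by (rule has_derivative_linear)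
    have "DERIV k t :> (e \<bullet> DD (p1 t) x + e \<bullet> DD (p2 t) (- x))"
      unfolding k_def by (intro DERIV_add line_rderiv[OF E1 \<theta> x(1)] line_rderiv[OF E2 \<theta> mx])
    moreover have "DD (p2 t) (- x) = - DD (p2 t) x" using l2 by (simp add: linear_neg)
    ultimately show ?thesis by simp
  qed
  obtain \<xi> where xi: "0 < \<xi>" "\<xi> < 1" "k 1 - k 0 = (1 - 0) * (e \<bullet> DD (p1 \<xi>) x - e \<bullet> DD (p2 \<xi>) x)"
    using MVT2[of 0 1 k, OF _ der] by auto
  define D1 where "D1 = DD (p1 \<xi>)" define D2 where "D2 = DD (p2 \<xi>)"
  have xi01: "0 \<le> \<xi>" "\<xi> \<le> 1" using xi by auto
  have D1p: "(g has_derivative D1) (at (p1 \<xi>) within Rd d)" "loewner_le d D1 H"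
    using DD[OF pin(1,3)[OF xi01]] unfolding D1_def by auto
  have D2p: "(g has_derivative D2) (at (p2 \<xi>) within Rd d)" "loewner_le d D2 H"
    using DD[OF pin(2,4)[OF xi01]] unfolding D2_def by auto
  define B where "B = (\<lambda>z. D1 z - D2 z)"
  have Bl: "linear B" unfolding B_def
    by (intro linear_compose_sub has_derivative_linear[OF D1p(1)] has_derivative_linear[OF D2p(1)])
  have Bs: "a \<bullet> B b = b \<bullet> B a" if "a \<in> Rd d" "b \<in> Rd d" for a b
    using hess_sym[OF gr D1p(1) pin(1)[OF xi01] that] hess_sym[OF gr D2p(1) pin(2)[OF xi01] that]
    unfolding B_def by (simp add: inner_diff_right)
  have BQ: "\<bar>z \<bullet> B z\<bar> \<le> L * (norm z)\<^sup>2 + z \<bullet> H z" if z: "z \<in> Rd d" for z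
  proof -
    have u1: "z \<bullet> D1 z \<le> z \<bullet> H z" "z \<bullet> D2 z \<le> z \<bullet> H z" using D1p(2) D2p(2) z by (auto simp: loewner_le_def)
    have l1: "- (L * (norm z)\<^sup>2) \<le> z \<bullet> D1 z"
      by (rule deriv_lower[OF D1p(1) pin(1)[OF xi01] _ z]) (rule lip[OF _ pin(1)[OF xi01]])
    have l2: "- (L * (norm z)\<^sup>2) \<le> z \<bullet> D2 z"
      by (rule deriv_lower[OF D2p(1) pin(2)[OF xi01] _ z]) (rule lip[OF _ pin(2)[OF xi01]])
    show ?thesis unfolding B_def using u1 l1 l2 by (simp add: inner_diff_right abs_le_iff)
  qed
  have "\<bar>e \<bullet> B x\<bar> \<le> sqrt (L * (norm e)\<^sup>2 + e \<bullet> H e) * sqrt (L * (norm x)\<^sup>2 + x \<bullet> H x)"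
    by (rule polar_bound[OF Bl Bs H L BQ e(1) x(1)])
  also have "sqrt (L * (norm e)\<^sup>2 + e \<bullet> H e) \<le> sqrt (2 * L)"
  proof -
    have "e \<bullet> H e \<le> e \<bullet> (L *\<^sub>R e)" using lw e(1) unfolding loewner_le_def by blast
    also have "e \<bullet> (L *\<^sub>R e) = L * (norm e)\<^sup>2" by (simp add: power2_norm_eq_inner)
    finally have "e \<bullet> H e \<le> L" using e(2) by simp
    then show ?thesis using e by simp
  qed
  then have "sqrt (L * (norm e)\<^sup>2 + e \<bullet> H e) * sqrt (L * (norm x)\<^sup>2 + x \<bullet> H x)
      \<le> sqrt (2 * L) * sqrt (L * (norm x)\<^sup>2 + x \<bullet> H x)" by (intro mult_right_mono) (auto intro!: add_nonneg_nonneg Hf(4) x(1) mult_nonneg_nonneg less_imp_le[OF L])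
  finally have bnd: "\<bar>e \<bullet> B x\<bar> \<le> sqrt (2 * L) * sqrt (L * (norm x)\<^sup>2 + x \<bullet> H x)" .
  have "k 1 - k 0 = e \<bullet> (g (\<theta> + x) + g (\<theta> - x) - 2 *\<^sub>R g \<theta>)"
    unfolding k_def by (simp add: inner_add_right inner_diff_right)
  moreover have "k 1 - k 0 = e \<bullet> B x" using xi(3) unfolding B_def D1_def D2_def by (simp add: inner_diff_right)
  ultimately show ?thesis using bnd by simp
qed

lemma meas_quad:
  assumes "linear H"
  shows "(\<lambda>u. vec_of d u \<bullet> H (vec_of d u)) \<in> borel_measurable (gauss d)"
  unfolding quad_expand[OF assms]
  by (intro borel_measurable_sum borel_measurable_times comp_measurable borel_measurable_const) auto

lemma sqrt_le_1_plus: "0 \<le> (q::real) \<Longrightarrow> sqrt q \<le> 1 + q"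
proof -
  assume q: "0 \<le> q"
  show ?thesis
  proof (cases "q \<le> 1")
    case True then have "sqrt q \<le> 1" by simp
    then show ?thesis using q by linarith
  next
    case False
    then have "sqrt q \<le> q" using real_sqrt_le_iff[of q "q * q"] by (simp add: real_sqrt_mult)
    then show ?thesis by linarith
  qed
qed

lemma E_sqrt_quad:
  assumes H: "psd_op d H" and L: "0 < L"
  shows "integrable (gauss d) (\<lambda>u. sqrt (L * (norm (vec_of d u))\<^sup>2 + vec_of d u \<bullet> H (vec_of d u)))"
    "(\<integral>u. sqrt (L * (norm (vec_of d u))\<^sup>2 + vec_of d u \<bullet> H (vec_of d u)) \<partial>gauss d)
       \<le> sqrt (L * real d + trace_op d H)"
proof -
  note Hf = psd_facts[OF H]
  define Q where "Q = (\<lambda>u. L * (norm (vec_of d u))\<^sup>2 + vec_of d u \<bullet> H (vec_of d u))"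
  have Qi: "integrable (gauss d) Q" unfolding Q_def
    by (intro Bochner_Integration.integrable_add Bochner_Integration.integrable_mult_right int_normsq E_quad Hf(1))
  have QE: "(\<integral>u. Q u \<partial>gauss d) = L * real d + trace_op d H"
    unfolding Q_def
    by (subst Bochner_Integration.integral_add)
       (auto intro!: Bochner_Integration.integrable_mult_right int_normsq E_quad Hf(1) simp: int_normsq(2) E_quad(2)[OF Hf(1)])
  have Q0: "0 \<le> Q u" for u unfolding Q_def using Hf(4)[OF vec_of_Rd[of d u]] L by (intro add_nonneg_nonneg) auto
  have Qm: "Q \<in> borel_measurable (gauss d)"
  proof -
    have "(\<lambda>u. norm (vec_of d u)) \<in> borel_measurable (gauss d)"
      by (rule meas_vec_of_cont) (rule continuous_on_norm_id)
    then show ?thesis unfolding Q_def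
      by (intro borel_measurable_add borel_measurable_times borel_measurable_power meas_quad Hf(1)
          borel_measurable_const)
  qed
  have Si: "integrable (gauss d) (\<lambda>u. sqrt (Q u))"
  proof (rule Bochner_Integration.integrable_bound[OF Bochner_Integration.integrable_add[OF int_const_gauss Qi]])
    show "(\<lambda>u. sqrt (Q u)) \<in> borel_measurable (gauss d)" using Qm by measurable
    show "AE x in gauss d. norm (sqrt (Q x)) \<le> norm (1 + Q x)"
      using Q0 sqrt_le_1_plus by (intro AE_I2) (simp add: abs_of_nonneg add_nonneg_nonneg)
  qed
  then show "integrable (gauss d) (\<lambda>u. sqrt (L * (norm (vec_of d u))\<^sup>2 + vec_of d u \<bullet> H (vec_of d u)))"
    unfolding Q_def .
  have "(\<integral>u. sqrt (Q u) \<partial>gauss d) \<le> sqrt (\<integral>u. Q u \<partial>gauss d)"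
    by (rule jensen_sqrt[OF prob_gauss Qi Q0 Si])
  then show "(\<integral>u. sqrt (L * (norm (vec_of d u))\<^sup>2 + vec_of d u \<bullet> H (vec_of d u)) \<partial>gauss d)
       \<le> sqrt (L * real d + trace_op d H)" unfolding QE[symmetric] Q_def .
qed

lemma err_int:
  fixes F :: "fvec \<Rightarrow> real" and g :: "fvec \<Rightarrow> fvec"
  assumes gr: "\<And>y. y \<in> Rd d \<Longrightarrow> has_grad d F (g y) y"
    and lip: "\<And>y z. y \<in> Rd d \<Longrightarrow> z \<in> Rd d \<Longrightarrow> norm (g y - g z) \<le> L * norm (y - z)"
    and L: "0 < L" and H: "psd_op d H" and lw: "loewner_le d H (\<lambda>v. L *\<^sub>R v)"
    and DD: "\<And>p. p \<in> Rd d \<Longrightarrow> norm (p - \<theta>) \<le> R \<Longrightarrow>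
        (g has_derivative DD p) (at p within Rd d) \<and> loewner_le d (DD p) H"
    and \<theta>: "\<theta> \<in> Rd d" and mu: "0 < \<mu>" and R: "2 * \<mu> * sqrt (real d) \<le> R" and d: "1 \<le> d"
    and e: "e \<in> Rd d" "norm e = 1"
  shows "(\<integral>u. (g (\<theta> + \<mu> *\<^sub>R vec_of d u) - g \<theta>) \<bullet> e \<partial>gauss d)
     \<le> sqrt (2 * L) * \<mu> * sqrt (L * real d + trace_op d H) / 2
        + L * \<mu> * (2 * sqrt (real d) * exp (- real d / 2))"
proof -
  note Hf = psd_facts[OF H]
  have amu: "\<bar>\<mu>\<bar> = \<mu>" "\<bar>- \<mu>\<bar> = \<mu>" using mu by auto
  define c where "c = 2 * sqrt (real d)"
  define W where "W = (\<lambda>m y. (g (\<theta> + m *\<^sub>R y) - g \<theta>) \<bullet> e)"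
  define ind where "ind = (\<lambda>t::real. if t \<le> c then 1 else (0::real))"
  define P where "P = (\<lambda>y. ind (norm y) * W \<mu> y)"
  define Qf where "Qf = (\<lambda>y. (1 - ind (norm y)) * W \<mu> y)"
  have gc: "continuous_on (Rd d) g" by (rule lip_cont[OF lip])
  have Wc: "continuous_on (Rd d) (W m)" for m
    unfolding W_def by (intro continuous_on_inner continuous_on_diff continuous_on_const cont_shift[OF gc \<theta>])
  have Wm: "(\<lambda>u. W m (vec_of d u)) \<in> borel_measurable (gauss d)" for m by (rule meas_vec_of[OF Wc])
  have Wneg: "W \<mu> (- y) = W (- \<mu>) y" for y unfolding W_def by simp
  have nm: "(\<lambda>u. norm (vec_of d u)) \<in> borel_measurable (gauss d)"
    by (rule meas_vec_of_cont) (rule continuous_on_norm_id)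
  have indm: "(\<lambda>u. ind (norm (vec_of d u))) \<in> borel_measurable (gauss d)"
  proof -
    have "ind \<in> borel_measurable borel" unfolding ind_def by measurable
    from measurable_compose[OF nm this] show ?thesis by (simp add: o_def)
  qed
  have Wb: "\<bar>W m y\<bar> \<le> L * \<bar>m\<bar> * norm y" if "y \<in> Rd d" for m y
  proof -
    have "\<bar>W m y\<bar> \<le> norm (g (\<theta> + m *\<^sub>R y) - g \<theta>) * norm e" unfolding W_def by (rule Cauchy_Schwarz_ineq2)
    also have "\<dots> \<le> L * norm (m *\<^sub>R y)" using lip[of "\<theta> + m *\<^sub>R y" \<theta>] \<theta> that e by auto
    finally show ?thesis by simp
  qed
  have ind01: "0 \<le> ind t" "ind t \<le> 1" for t unfolding ind_def by auto
  have bnd_int: "integrable (gauss d) f" if "f \<in> borel_measurable (gauss d)"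
      "\<And>u. \<bar>f u\<bar> \<le> L * \<mu> * norm (vec_of d u)" for f
    by (rule int_bound_norm[OF that(1), of 0 "L * \<mu>" 0]) (use that(2) in simp)
  have Pb: "\<bar>ind t * w\<bar> \<le> \<bar>w\<bar>" "\<bar>(1 - ind t) * w\<bar> \<le> \<bar>w\<bar>" for t w
    using ind01[of t] by (auto simp: abs_mult intro: mult_left_le_one_le)
  have Wvb: "\<bar>W m (vec_of d u)\<bar> \<le> L * \<mu> * norm (vec_of d u)" if "\<bar>m\<bar> = \<mu>" for m u
    using Wb[of "vec_of d u" m] that by simp
  have Wi: "integrable (gauss d) (\<lambda>u. W \<mu> (vec_of d u))"
    by (rule bnd_int[OF Wm]) (rule Wvb, rule amu)
  have Pm: "(\<lambda>u. P (vec_of d u)) \<in> borel_measurable (gauss d)"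
    unfolding P_def by (intro borel_measurable_times indm Wm)
  have Pi: "integrable (gauss d) (\<lambda>u. P (vec_of d u))"
    by (rule bnd_int[OF Pm]) (rule order_trans[OF _ Wvb[of \<mu>]], auto simp: P_def Pb amu)
  have Pnm: "(\<lambda>u. P (- vec_of d u)) \<in> borel_measurable (gauss d)"
    unfolding P_def Wneg norm_minus_cancel by (intro borel_measurable_times indm Wm)
  have Pni: "integrable (gauss d) (\<lambda>u. P (- vec_of d u))"
    by (rule bnd_int[OF Pnm]) (rule order_trans[OF _ Wvb[of "- \<mu>"]], auto simp: P_def Pb amu Wneg)
  have Qm: "(\<lambda>u. Qf (vec_of d u)) \<in> borel_measurable (gauss d)"
    unfolding Qf_def by (intro borel_measurable_times borel_measurable_diff indm Wm borel_measurable_const)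
  have Qi: "integrable (gauss d) (\<lambda>u. Qf (vec_of d u))"
    by (rule bnd_int[OF Qm]) (rule order_trans[OF _ Wvb[of \<mu>]], auto simp: Qf_def Pb amu)
  have s1: "(\<integral>u. W \<mu> (vec_of d u) \<partial>gauss d) = (\<integral>u. P (vec_of d u) \<partial>gauss d) + (\<integral>u. Qf (vec_of d u) \<partial>gauss d)"
  proof -
    have "(\<integral>u. W \<mu> (vec_of d u) \<partial>gauss d) = (\<integral>u. P (vec_of d u) + Qf (vec_of d u) \<partial>gauss d)"
      by (intro Bochner_Integration.integral_cong refl) (simp add: P_def Qf_def algebra_simps)
    also have "\<dots> = (\<integral>u. P (vec_of d u) \<partial>gauss d) + (\<integral>u. Qf (vec_of d u) \<partial>gauss d)"
      by (rule Bochner_Integration.integral_add[OF Pi Qi])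
    finally show ?thesis .
  qed
  have s2: "(\<integral>u. P (- vec_of d u) \<partial>gauss d) = (\<integral>u. P (vec_of d u) \<partial>gauss d)"
    by (rule gauss_reflect[OF Pm])
  have pw: "P (vec_of d u) + P (- vec_of d u)
      \<le> sqrt (2 * L) * \<mu> * sqrt (L * (norm (vec_of d u))\<^sup>2 + vec_of d u \<bullet> H (vec_of d u))" for u
  proof (cases "norm (vec_of d u) \<le> c")
    case True
    define y where "y = vec_of d u"
    define x where "x = \<mu> *\<^sub>R y"
    have y: "y \<in> Rd d" unfolding y_def by simp
    have x: "x \<in> Rd d" unfolding x_def using y by auto
    have xn: "norm x \<le> R"
    proof -
      have "norm x = \<mu> * norm y" unfolding x_def using mu by simp
      also have "\<dots> \<le> \<mu> * c" using True mu unfolding y_def by (intro mult_left_mono) auto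
      finally show ?thesis using R unfolding c_def by (simp add: mult_ac)
    qed
    have "P y + P (- y) = e \<bullet> (g (\<theta> + x) + g (\<theta> - x) - 2 *\<^sub>R g \<theta>)"
      using True unfolding P_def W_def ind_def x_def y_def
      by (simp add: inner_commute inner_add_right inner_diff_right algebra_simps)
    also have "\<dots> \<le> \<bar>e \<bullet> (g (\<theta> + x) + g (\<theta> - x) - 2 *\<^sub>R g \<theta>)\<bar>" by simp
    also have "\<dots> \<le> sqrt (2 * L) * sqrt (L * (norm x)\<^sup>2 + x \<bullet> H x)"
      by (rule second_diff[OF gr lip L H lw DD \<theta> e x xn])
    also have "L * (norm x)\<^sup>2 + x \<bullet> H x = \<mu>\<^sup>2 * (L * (norm y)\<^sup>2 + y \<bullet> H y)"
      unfolding x_def using Hf(1) by (simp add: linear_scale power2_eq_square algebra_simps)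
    also have "sqrt (\<mu>\<^sup>2 * (L * (norm y)\<^sup>2 + y \<bullet> H y)) = \<mu> * sqrt (L * (norm y)\<^sup>2 + y \<bullet> H y)"
      using mu by (simp add: real_sqrt_mult)
    finally show ?thesis unfolding y_def by (simp add: mult.assoc)
  next
    case False
    then have "P (vec_of d u) + P (- vec_of d u) = 0" unfolding P_def ind_def by simp
    also have "0 \<le> sqrt (2 * L) * \<mu> * sqrt (L * (norm (vec_of d u))\<^sup>2 + vec_of d u \<bullet> H (vec_of d u))"
      using L mu Hf(4)[OF vec_of_Rd[of d u]] by (intro mult_nonneg_nonneg) auto
    finally show ?thesis .
  qed
  have s3: "(\<integral>u. P (vec_of d u) \<partial>gauss d) \<le> sqrt (2 * L) * \<mu> * sqrt (L * real d + trace_op d H) / 2"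
  proof -
    have "2 * (\<integral>u. P (vec_of d u) \<partial>gauss d) = (\<integral>u. P (vec_of d u) + P (- vec_of d u) \<partial>gauss d)"
      using s2 Bochner_Integration.integral_add[OF Pi Pni] by simp
    also have "\<dots> \<le> (\<integral>u. sqrt (2 * L) * \<mu> * sqrt (L * (norm (vec_of d u))\<^sup>2 + vec_of d u \<bullet> H (vec_of d u)) \<partial>gauss d)"
      by (rule integral_mono[OF Bochner_Integration.integrable_add[OF Pi Pni]
            Bochner_Integration.integrable_mult_right[OF E_sqrt_quad(1)[OF H L]] pw])
    also have "\<dots> = sqrt (2 * L) * \<mu> * (\<integral>u. sqrt (L * (norm (vec_of d u))\<^sup>2 + vec_of d u \<bullet> H (vec_of d u)) \<partial>gauss d)"
      by simp
    also have "\<dots> \<le> sqrt (2 * L) * \<mu> * sqrt (L * real d + trace_op d H)"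
      using E_sqrt_quad(2)[OF H L] L mu by (intro mult_left_mono) auto
    finally show ?thesis by simp
  qed
  have pwq: "Qf (vec_of d u) \<le> L * \<mu> * tailf d (norm (vec_of d u))" for u
  proof (cases "norm (vec_of d u) \<le> c")
    case True
    then show ?thesis using L mu unfolding Qf_def ind_def by (simp add: tailf_def)
  next
    case False
    then have "Qf (vec_of d u) = W \<mu> (vec_of d u)" unfolding Qf_def ind_def by simp
    also have "\<dots> \<le> L * \<mu> * norm (vec_of d u)" using Wvb[of \<mu> u] mu by simp
    also have "norm (vec_of d u) = tailf d (norm (vec_of d u))" using False unfolding tailf_def c_def by simp
    finally show ?thesis .
  qed
  have s4: "(\<integral>u. Qf (vec_of d u) \<partial>gauss d) \<le> L * \<mu> * (2 * sqrt (real d) * exp (- real d / 2))"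
  proof -
    have "(\<integral>u. Qf (vec_of d u) \<partial>gauss d) \<le> (\<integral>u. L * \<mu> * tailf d (norm (vec_of d u)) \<partial>gauss d)"
      by (rule integral_mono[OF Qi Bochner_Integration.integrable_mult_right[OF tail_bound(1)[OF d]] pwq])
    also have "\<dots> = L * \<mu> * (\<integral>u. tailf d (norm (vec_of d u)) \<partial>gauss d)" by simp
    also have "\<dots> \<le> L * \<mu> * (2 * sqrt (real d) * exp (- real d / 2))"
      using tail_bound(2)[OF d] L mu by (intro mult_left_mono) auto
    finally show ?thesis .
  qed
  show ?thesis using s1 s3 s4 unfolding W_def by simp
qed

lemma exp_half_le2: "exp (1/2::real) \<le> 2"
proof -
  have "exp (1/2::real) * exp (1/2) = exp 1" by (simp add: exp_add[symmetric])
  also have "\<dots> \<le> 3" by (rule exp_le)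
  finally have "(exp (1/2::real))\<^sup>2 \<le> 2\<^sup>2" by (simp add: power2_eq_square)
  then show ?thesis by (rule power2_le_imp_le) simp
qed

lemma final_arith:
  fixes d :: nat
  assumes L: "0 < L" and mu: "0 < \<mu>" and d: "1 \<le> d" and r1: "1 \<le> r" and rd: "r \<le> real d"
    and T0: "0 \<le> T" and T: "T \<le> r * L"
  shows "sqrt (2 * L) * \<mu> * sqrt (L * real d + T) / 2 + L * \<mu> * (2 * sqrt (real d) * exp (- real d / 2))
    \<le> sqrt 3 * \<mu> * L * r * sqrt (real d) / 2 + \<mu> * L * (real d + 4) * sqrt (real d) / 2 * exp (- 1 / 2 * real d)"
proof -
  define E where "E = exp (- real d / 2)"
  have E0: "0 < E" unfolding E_def by simp
  have eE: "exp (- 1 / 2 * real d) = E" unfolding E_def by simp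
  have s1: "sqrt (2 * L) * sqrt (L * real d + T) \<le> L * sqrt (2 * (real d + r))"
  proof -
    have "sqrt (2 * L) * sqrt (L * real d + T) = sqrt ((2 * L) * (L * real d + T))" by (simp add: real_sqrt_mult)
    also have "\<dots> \<le> sqrt ((2 * L) * (L * (real d + r)))"
      using T L by (intro real_sqrt_le_mono mult_left_mono) (auto simp: algebra_simps)
    also have "(2 * L) * (L * (real d + r)) = L\<^sup>2 * (2 * (real d + r))" by (simp add: power2_eq_square)
    also have "sqrt (L\<^sup>2 * (2 * (real d + r))) = L * sqrt (2 * (real d + r))" using L by (simp add: real_sqrt_mult)
    finally show ?thesis .
  qed
  have key: "sqrt (2 * (real d + r)) / 2 + 2 * sqrt (real d) * E \<le> sqrt 3 * r * sqrt (real d) / 2 + (real d + 4) * sqrt (real d) / 2 * E"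
  proof (cases "d = 1")
    case True
    then have r: "r = 1" using r1 rd by simp
    have "sqrt (2 * (real d + r)) = 2" using True r by simp
    moreover have "sqrt 3 \<ge> (3/2::real)"
      by (rule real_le_rsqrt) (simp add: power2_eq_square)
    moreover have "E \<ge> 1/2"
    proof -
      have "exp (1/2::real) \<le> 2" by (rule exp_half_le2)
      then have "1 / 2 \<le> 1 / exp (1/2::real)" by (simp add: field_simps)
      then show ?thesis unfolding E_def using True by (simp add: exp_minus field_simps)
    qed
    ultimately show ?thesis using True r by simp
  next
    case False
    then have d2: "2 \<le> real d" using d by simp
    have "2 * (real d + r) \<le> 3 * r\<^sup>2 * real d"
    proof -
      have "r \<le> r\<^sup>2" using r1 by (simp add: power2_eq_square)
      moreover have "r\<^sup>2 * 2 \<le> r\<^sup>2 * real d" using d2 by (intro mult_left_mono) auto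
      ultimately have "2 * r \<le> r\<^sup>2 * real d" by linarith
      moreover have "1 \<le> r\<^sup>2" using r1 \<open>r \<le> r\<^sup>2\<close> by linarith
      then have "1 * real d \<le> r\<^sup>2 * real d" by (intro mult_right_mono) auto
      then have "2 * real d \<le> 2 * r\<^sup>2 * real d" by simp
      ultimately show ?thesis by simp
    qed
    then have "sqrt (2 * (real d + r)) \<le> sqrt (3 * r\<^sup>2 * real d)" by (rule real_sqrt_le_mono)
    also have "sqrt (3 * r\<^sup>2 * real d) = sqrt 3 * r * sqrt (real d)" using r1 by (simp add: real_sqrt_mult)
    finally have a: "sqrt (2 * (real d + r)) / 2 \<le> sqrt 3 * r * sqrt (real d) / 2" by simp
    have b: "2 * sqrt (real d) * E \<le> (real d + 4) * sqrt (real d) / 2 * E"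
      using E0 by (intro mult_right_mono) (auto simp: field_simps)
    show ?thesis using a b by simp
  qed
  have "sqrt (2 * L) * \<mu> * sqrt (L * real d + T) / 2 + L * \<mu> * (2 * sqrt (real d) * E)
      = \<mu> * (sqrt (2 * L) * sqrt (L * real d + T)) / 2 + L * \<mu> * (2 * sqrt (real d) * E)" by simp
  also have "\<dots> \<le> \<mu> * (L * sqrt (2 * (real d + r))) / 2 + L * \<mu> * (2 * sqrt (real d) * E)"
    using s1 mu by (simp add: mult_left_mono)
  also have "\<dots> = (L * \<mu>) * (sqrt (2 * (real d + r)) / 2 + 2 * sqrt (real d) * E)" by (simp add: algebra_simps)
  also have "\<dots> \<le> (L * \<mu>) * (sqrt 3 * r * sqrt (real d) / 2 + (real d + 4) * sqrt (real d) / 2 * E)"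
    using key L mu by (intro mult_left_mono) auto
  also have "\<dots> = sqrt 3 * \<mu> * L * r * sqrt (real d) / 2 + \<mu> * L * (real d + 4) * sqrt (real d) / 2 * exp (- 1 / 2 * real d)"
    unfolding eE by (simp add: algebra_simps)
  finally show ?thesis unfolding E_def .
qed

lemma sq_arith:
  fixes a b X B1 B2 :: real
  assumes "0 \<le> a" "a \<le> b + X" "X \<le> B1 + B2" "0 \<le> b"
  shows "a\<^sup>2 \<le> 4 * B1\<^sup>2 + 4 * B2\<^sup>2 + 2 * b\<^sup>2"
proof -
  have "a \<le> b + (B1 + B2)" using assms by linarith
  then have "a\<^sup>2 \<le> (b + (B1 + B2))\<^sup>2" using assms(1) by (intro power_mono) auto
  also have "\<dots> \<le> 2 * b\<^sup>2 + 2 * (B1 + B2)\<^sup>2"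
  proof -
    have "0 \<le> (b - (B1 + B2))\<^sup>2" by simp
    then show ?thesis by (simp add: power2_eq_square algebra_simps)
  qed
  also have "2 * (B1 + B2)\<^sup>2 \<le> 4 * B1\<^sup>2 + 4 * B2\<^sup>2"
  proof -
    have "0 \<le> (B1 - B2)\<^sup>2" by simp
    then show ?thesis by (simp add: power2_eq_square algebra_simps)
  qed
  finally show ?thesis by simp
qed

theorem mainTheorem10:
  shows "\<exists>c1>0. \<forall>(d::nat) (N::nat) (Li :: nat \<Rightarrow> fvec \<Rightarrow> real) (gi :: nat \<Rightarrow> fvec \<Rightarrow> fvec)
      (gL :: fvec \<Rightarrow> fvec) (L::real) (\<sigma>::real) (G::real) (\<mu>::real) (\<alpha>::real) (s::real)
      (r::real) (\<theta>t::fvec).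
    let Loss = (\<lambda>\<theta>. (\<Sum>i<N. Li i \<theta>) / real N) in
    ( N > 0 \<and> L > 0 \<and> \<mu> > 0 \<and> \<alpha> > 0 \<and> s > 0 \<and> r \<le> real d \<and> \<theta>t \<in> Rd d
    \<comment> \<open>(C-1): every per-sample loss is L-smooth\<close>
    \<and> (\<forall>i<N. smooth_with d L (Li i) (gi i))
    \<comment> \<open>gL is the gradient of the overall loss\<close>
    \<and> (\<forall>\<theta>\<in>Rd d. has_grad d Loss (gL \<theta>) \<theta>)
    \<comment> \<open>(C-2): stochastic gradients (uniformly sampled) have variance at most sigma^2,
        and the gradient is bounded by G\<close>
    \<and> (\<forall>\<theta>\<in>Rd d. (\<Sum>i<N. (norm (gi i \<theta> - gL \<theta>))\<^sup>2) / real N \<le> \<sigma>\<^sup>2)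
    \<and> (\<forall>\<theta>\<in>Rd d. norm (gL \<theta>) \<le> G)
    \<comment> \<open>Local Intrinsic Dimension assumption at theta_t\<close>
    \<and> (\<exists>H. psd_op d H \<and> loewner_le d H (\<lambda>v. L *\<^sub>R v) \<and> opnorm d H > 0 \<and> intdim d H \<le> r
         \<and> (\<forall>\<theta>\<in>Rd d. norm (\<theta> - \<theta>t) \<le> 2 * \<alpha> * s * G + 2 * \<mu> * sqrt (real d) \<longrightarrow>
              (\<exists>D. (gL has_derivative D) (at \<theta> within Rd d) \<and> loewner_le d D H))) )
    \<longrightarrow>
    (\<exists>g\<mu>. has_grad d (smoothed d \<mu> Loss) g\<mu> \<theta>t
      \<and> norm (g\<mu> - gL \<theta>t) \<le> sqrt 3 * \<mu> * L * r * sqrt (real d) / 2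
           + \<mu> * L * (real d + 4) * sqrt (real d) / 2 * exp (- c1 / 2 * real d)
      \<and> (norm (gL \<theta>t))\<^sup>2 \<le> 3 * \<mu>\<^sup>2 * L\<^sup>2 * r\<^sup>2 * real d
           + \<mu>\<^sup>2 * L\<^sup>2 * real d * (real d + 4)\<^sup>2 * exp (- c1 * real d) + 2 * (norm g\<mu>)\<^sup>2)"
proof (intro exI[of _ 1] conjI allI)
  show "(0::real) < 1" by simp
next
  fix d N :: nat and Li :: "nat \<Rightarrow> fvec \<Rightarrow> real" and gi :: "nat \<Rightarrow> fvec \<Rightarrow> fvec"
    and gL :: "fvec \<Rightarrow> fvec" and L \<sigma> G \<mu> \<alpha> s r :: real and \<theta>t :: fvec
  show "let Loss = (\<lambda>\<theta>. (\<Sum>i<N. Li i \<theta>) / real N) in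
    ( N > 0 \<and> L > 0 \<and> \<mu> > 0 \<and> \<alpha> > 0 \<and> s > 0 \<and> r \<le> real d \<and> \<theta>t \<in> Rd d
    \<and> (\<forall>i<N. smooth_with d L (Li i) (gi i))
    \<and> (\<forall>\<theta>\<in>Rd d. has_grad d Loss (gL \<theta>) \<theta>)
    \<and> (\<forall>\<theta>\<in>Rd d. (\<Sum>i<N. (norm (gi i \<theta> - gL \<theta>))\<^sup>2) / real N \<le> \<sigma>\<^sup>2)
    \<and> (\<forall>\<theta>\<in>Rd d. norm (gL \<theta>) \<le> G)
    \<and> (\<exists>H. psd_op d H \<and> loewner_le d H (\<lambda>v. L *\<^sub>R v) \<and> opnorm d H > 0 \<and> intdim d H \<le> r
         \<and> (\<forall>\<theta>\<in>Rd d. norm (\<theta> - \<theta>t) \<le> 2 * \<alpha> * s * G + 2 * \<mu> * sqrt (real d) \<longrightarrow>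
              (\<exists>D. (gL has_derivative D) (at \<theta> within Rd d) \<and> loewner_le d D H))) )
    \<longrightarrow>
    (\<exists>g\<mu>. has_grad d (smoothed d \<mu> Loss) g\<mu> \<theta>t
      \<and> norm (g\<mu> - gL \<theta>t) \<le> sqrt 3 * \<mu> * L * r * sqrt (real d) / 2
           + \<mu> * L * (real d + 4) * sqrt (real d) / 2 * exp (- 1 / 2 * real d)
      \<and> (norm (gL \<theta>t))\<^sup>2 \<le> 3 * \<mu>\<^sup>2 * L\<^sup>2 * r\<^sup>2 * real d
           + \<mu>\<^sup>2 * L\<^sup>2 * real d * (real d + 4)\<^sup>2 * exp (- 1 * real d) + 2 * (norm g\<mu>)\<^sup>2)"
    unfolding Let_def
  proof (intro impI, elim conjE)
    define Loss where "Loss = (\<lambda>\<theta>. (\<Sum>i<N. Li i \<theta>) / real N)"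
    assume N: "0 < N" and L: "0 < L" and mu: "0 < \<mu>" and al: "0 < \<alpha>" and s: "0 < s"
      and rd: "r \<le> real d" and th: "\<theta>t \<in> Rd d"
      and sm: "\<forall>i<N. smooth_with d L (Li i) (gi i)"
      and hg0: "\<forall>\<theta>\<in>Rd d. has_grad d (\<lambda>\<theta>. (\<Sum>i<N. Li i \<theta>) / real N) (gL \<theta>) \<theta>"
      and var: "\<forall>\<theta>\<in>Rd d. (\<Sum>i<N. (norm (gi i \<theta> - gL \<theta>))\<^sup>2) / real N \<le> \<sigma>\<^sup>2"
      and Gb: "\<forall>\<theta>\<in>Rd d. norm (gL \<theta>) \<le> G"
      and LID: "\<exists>H. psd_op d H \<and> loewner_le d H (\<lambda>v. L *\<^sub>R v) \<and> opnorm d H > 0 \<and> intdim d H \<le> r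
         \<and> (\<forall>\<theta>\<in>Rd d. norm (\<theta> - \<theta>t) \<le> 2 * \<alpha> * s * G + 2 * \<mu> * sqrt (real d) \<longrightarrow>
              (\<exists>D. (gL has_derivative D) (at \<theta> within Rd d) \<and> loewner_le d D H))"
    have hg: "\<forall>\<theta>\<in>Rd d. has_grad d Loss (gL \<theta>) \<theta>" using hg0 unfolding Loss_def .
    have gr: "\<And>y. y \<in> Rd d \<Longrightarrow> has_grad d Loss (gL y) y" using hg by blast
    have lip: "\<And>y z. y \<in> Rd d \<Longrightarrow> z \<in> Rd d \<Longrightarrow> norm (gL y - gL z) \<le> L * norm (y - z)"
      by (rule gL_lip[OF N sm hg0])
    obtain H where H: "psd_op d H" and lw: "loewner_le d H (\<lambda>v. L *\<^sub>R v)" and op: "opnorm d H > 0"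
      and idim: "intdim d H \<le> r"
      and loc: "\<forall>\<theta>\<in>Rd d. norm (\<theta> - \<theta>t) \<le> 2 * \<alpha> * s * G + 2 * \<mu> * sqrt (real d) \<longrightarrow>
              (\<exists>D. (gL has_derivative D) (at \<theta> within Rd d) \<and> loewner_le d D H)"
      using LID by blast
    define R where "R = 2 * \<alpha> * s * G + 2 * \<mu> * sqrt (real d)"
    have G0: "0 \<le> G" using Gb th by (meson norm_ge_zero order_trans)
    have R: "2 * \<mu> * sqrt (real d) \<le> R" unfolding R_def using al s G0 by simp
    have "\<forall>p. \<exists>D. p \<in> Rd d \<and> norm (p - \<theta>t) \<le> R \<longrightarrow>
        (gL has_derivative D) (at p within Rd d) \<and> loewner_le d D H"
      using loc unfolding R_def by blast
    then obtain DD where DD0: "\<And>p. p \<in> Rd d \<and> norm (p - \<theta>t) \<le> R \<longrightarrow>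
        (gL has_derivative DD p) (at p within Rd d) \<and> loewner_le d (DD p) H"
      by metis
    have DD: "\<And>p. p \<in> Rd d \<Longrightarrow> norm (p - \<theta>t) \<le> R \<Longrightarrow>
        (gL has_derivative DD p) (at p within Rd d) \<and> loewner_le d (DD p) H"
      using DD0 by blast
    define gm where "gm = vec_of d (\<lambda>i. \<integral>u. vx (gL (\<theta>t + \<mu> *\<^sub>R vec_of d u)) i \<partial>gauss d)"
    have hgm: "has_grad d (smoothed d \<mu> Loss) gm \<theta>t"
      unfolding gm_def by (rule smoothed_grad[OF gr lip L th])
    define B1 where "B1 = sqrt 3 * \<mu> * L * r * sqrt (real d) / 2"
    define B2 where "B2 = \<mu> * L * (real d + 4) * sqrt (real d) / 2 * exp (- 1 / 2 * real d)"
    have errb: "norm (gm - gL \<theta>t) \<le> B1 + B2"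
    proof (cases "d = 0")
      case True
      have "gm - gL \<theta>t \<in> Rd d" unfolding gm_def using Gb th hg by (auto simp: has_grad_def)
      then have "gm - gL \<theta>t = 0" using True by (intro fvec_eqI) (simp add: Rd_def)
      then show ?thesis using True unfolding B1_def B2_def by simp
    next
      case False
      then have d1: "1 \<le> d" by simp
      have Hfs: "trace_op d H \<le> r * L" "1 \<le> r" "0 \<le> trace_op d H"
        using H_facts[OF H lw op idim d1 L] by auto
      have B0: "0 \<le> B1" "0 \<le> B2" unfolding B1_def B2_def using mu L Hfs by auto
      define err where "err = gm - gL \<theta>t"
      have errR: "err \<in> Rd d" unfolding err_def gm_def using hg th by (auto simp: has_grad_def)
      show ?thesis
      proof (cases "err = 0")
        case True then show ?thesis using B0 unfolding err_def by simp
      next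
        case False
        define e where "e = err /\<^sub>R norm err"
        have e: "e \<in> Rd d" "norm e = 1" unfolding e_def using errR False by auto
        have ne: "norm err = e \<bullet> err" unfolding e_def using False
          by (simp add: power2_norm_eq_inner[symmetric] power2_eq_square)
        interpret P: prob_space "gauss d" by (rule prob_gauss)
        have gi: "gm \<bullet> e = (\<integral>u. gL (\<theta>t + \<mu> *\<^sub>R vec_of d u) \<bullet> e \<partial>gauss d)"
          unfolding gm_def by (rule gmu_inner[OF lip th e(1)])
        have ii: "integrable (gauss d) (\<lambda>u. gL (\<theta>t + \<mu> *\<^sub>R vec_of d u) \<bullet> e)"
          by (rule int_g_dir[OF lip th e(1)])
        have "e \<bullet> err = (\<integral>u. (gL (\<theta>t + \<mu> *\<^sub>R vec_of d u) - gL \<theta>t) \<bullet> e \<partial>gauss d)"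
        proof -
          have "(\<integral>u. (gL (\<theta>t + \<mu> *\<^sub>R vec_of d u) - gL \<theta>t) \<bullet> e \<partial>gauss d)
              = (\<integral>u. gL (\<theta>t + \<mu> *\<^sub>R vec_of d u) \<bullet> e - gL \<theta>t \<bullet> e \<partial>gauss d)"
            by (simp add: inner_diff_left)
          also have "\<dots> = (\<integral>u. gL (\<theta>t + \<mu> *\<^sub>R vec_of d u) \<bullet> e \<partial>gauss d) - gL \<theta>t \<bullet> e"
            using Bochner_Integration.integral_diff[OF ii int_const_gauss] by (simp add: P.prob_space)
          finally show ?thesis unfolding err_def gi[symmetric] by (simp add: inner_diff_right inner_commute)
        qed
        also have "\<dots> \<le> sqrt (2 * L) * \<mu> * sqrt (L * real d + trace_op d H) / 2
            + L * \<mu> * (2 * sqrt (real d) * exp (- real d / 2))"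
          by (rule err_int[OF gr lip L H lw DD th mu R d1 e])
        also have "\<dots> \<le> B1 + B2" unfolding B1_def B2_def
          by (rule final_arith[OF L mu d1 Hfs(2) rd Hfs(3) Hfs(1)])
        finally show ?thesis using ne unfolding err_def by simp
      qed
    qed
    have sq: "(norm (gL \<theta>t))\<^sup>2 \<le> 4 * B1\<^sup>2 + 4 * B2\<^sup>2 + 2 * (norm gm)\<^sup>2"
    proof (rule sq_arith[OF norm_ge_zero _ errb norm_ge_zero])
      have "gL \<theta>t = gm - (gm - gL \<theta>t)" by simp
      then show "norm (gL \<theta>t) \<le> norm gm + norm (gm - gL \<theta>t)" by (metis norm_triangle_ineq4)
    qed
    have e1: "4 * B1\<^sup>2 = 3 * \<mu>\<^sup>2 * L\<^sup>2 * r\<^sup>2 * real d"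
      unfolding B1_def by (simp add: power_mult_distrib power_divide)
    have e2: "4 * B2\<^sup>2 = \<mu>\<^sup>2 * L\<^sup>2 * real d * (real d + 4)\<^sup>2 * exp (- 1 * real d)"
    proof -
      have "(exp (- 1 / 2 * real d))\<^sup>2 = exp (- 1 * real d)"
        by (simp add: power2_eq_square exp_add[symmetric])
      then show ?thesis unfolding B2_def by (simp add: power_mult_distrib power_divide mult_ac)
    qed
    show "\<exists>g\<mu>. has_grad d (smoothed d \<mu> (\<lambda>\<theta>. (\<Sum>i<N. Li i \<theta>) / real N)) g\<mu> \<theta>t
      \<and> norm (g\<mu> - gL \<theta>t) \<le> sqrt 3 * \<mu> * L * r * sqrt (real d) / 2
           + \<mu> * L * (real d + 4) * sqrt (real d) / 2 * exp (- 1 / 2 * real d)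
      \<and> (norm (gL \<theta>t))\<^sup>2 \<le> 3 * \<mu>\<^sup>2 * L\<^sup>2 * r\<^sup>2 * real d
           + \<mu>\<^sup>2 * L\<^sup>2 * real d * (real d + 4)\<^sup>2 * exp (- 1 * real d) + 2 * (norm g\<mu>)\<^sup>2"
      using hgm errb sq e1 e2 unfolding Loss_def B1_def B2_def by (intro exI[of _ gm]) auto
  qed
qed


end
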